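(* Let $d\ge2$, let $a$ be an i.i.d. conductivity function on $\mathbb{Z}^d$, $T>0$, $\xi\in\mathbb{R}^d$ with $|\xi|=1$, and let $G_T$ and $\phi_T$ be the associated Green's function and approximate corrector. Then for every edge $e=[z,z+e_i]$ and every $x\in\mathbb{Z}^d$, \[ \frac{\partial\phi_T(x;a)}{\partial a(e)}=-\big(\nabla_i\phi_T(z;a)+\xi_i\big)\nabla_{z_i}G_T(z,x;a), \] and for all $n\in\mathbb{N}$, \[ \sup_{a(e)}\Big|\frac{\partial}{\partial a(e)}\big[\phi_T(x;a)^{n+1}\big]\Big|\lesssim|\phi_T(x;a)|^n\big(|\nabla_i\phi_T(z;a)|+1\big)|\nabla_{z_i}G_T(z,x;a)|+\big(|\nabla_i\phi_T(z;a)|+1\big)^{n+1}|\nabla_{z_i}G_T(z,x;a)|^{n+1}. \] In addition, \[ \sup_{a(e)}|\nabla_i\phi_T(z;a)|\lesssim|\nabla_i\phi_T(z;a)|+1. \] The multiplicative constant in the second estimate depends on $n$ in addition to $\alpha,\beta,d$.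
   Context: A conductivity function on $\mathbb{Z}^d$ is $a:\mathbb{Z}^d\times\mathbb{Z}^d\to\mathbb{R}^+$ with $a(x,y)=0$ if $|x-y|\ne1$ and $a(x,y)=a(y,x)\in[\alpha,\beta]$ if $|x-y|=1$, $0<\alpha\le\beta$; $a(e)$ denotes its value on the edge $e$; i.i.d. means the edge values are independent identically distributed. With $e_1,\dots,e_d$ the canonical basis: $\nabla u(x)=(u(x+e_i)-u(x))_i$, $\nabla^*u(x)=(u(x)-u(x-e_i))_i$, $\nabla^*\cdot g=\sum_i\nabla^*_ig_i$, $A(x)=\operatorname{diag}(a(x,x+e_1),\dots,a(x,x+e_d))$. The Green's function $G_T(\cdot,y;a)$ is the unique solution in $L^2(\mathbb{Z}^d)$ of $\sum_xT^{-1}G_T(x,y)v(x)+\sum_x\nabla v(x)\cdot A(x)\nabla_xG_T(x,y)=v(y)$ for all $v\in L^2(\mathbb{Z}^d)$; $\nabla_{z_i}G_T(z,x)=G_T(z+e_i,x)-G_T(z,x)$. The approximate corrector $\phi_T$ is the unique stationary random function with $T^{-1}\phi_T-\nabla^*\cdot A(\nabla\phi_T+\xi)=0$ and $\langle\phi_T\rangle=0$. $\sup_{a(e)}$ is the supremum over the value $a(e)\in[\alpha,\beta]$ with all other coefficients fixed. $X\lesssim Y$ means $X\le CY$ with $C$ depending only on $d,\alpha,\beta$ (unless stated otherwise). *)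

theory Defs
  imports "HOL-Analysis.Analysis"
begin

text \<open>Sites of the lattice Z^d are vectors int^'d (d = CARD('d)).
  A conductivity is encoded by its values on the edges [z, z+e_i]:
  a z i = a(z, z+e_i). Symmetry a(x,y)=a(y,x) is built into this encoding.\<close>

type_synonym 'd site = "int ^ 'd"
type_synonym 'd cond = "'d site \<Rightarrow> 'd \<Rightarrow> real"

definition unitv :: "'d::finite \<Rightarrow> int ^ 'd" where
  "unitv i = axis i 1"

definition grad :: "('d::finite site \<Rightarrow> real) \<Rightarrow> 'd site \<Rightarrow> 'd \<Rightarrow> real" where
  "grad u x i = u (x + unitv i) - u x"

definition divstar :: "('d::finite site \<Rightarrow> 'd \<Rightarrow> real) \<Rightarrow> 'd site \<Rightarrow> real" where
  "divstar g x = (\<Sum>i\<in>UNIV. g x i - g (x - unitv i) i)"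

definition conductivity :: "real \<Rightarrow> real \<Rightarrow> 'd::finite cond \<Rightarrow> bool" where
  "conductivity \<alpha> \<beta> a \<longleftrightarrow> (\<forall>z i. \<alpha> \<le> a z i \<and> a z i \<le> \<beta>)"

definition cond_upd :: "'d::finite cond \<Rightarrow> 'd site \<Rightarrow> 'd \<Rightarrow> real \<Rightarrow> 'd cond" where
  "cond_upd a z i t = a(z := (a z)(i := t))"

definition green_eq :: "real \<Rightarrow> 'd::finite cond \<Rightarrow> 'd site \<Rightarrow> ('d site \<Rightarrow> real) \<Rightarrow> bool" where
  "green_eq T a y G \<longleftrightarrow>
     (\<lambda>x. (G x)\<^sup>2) summable_on UNIV \<and>
     (\<forall>v. (\<lambda>x. (v x)\<^sup>2) summable_on UNIV \<longrightarrow>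
        (\<Sum>\<^sub>\<infinity>x. G x * v x / T) + (\<Sum>\<^sub>\<infinity>x. (\<Sum>i\<in>UNIV. grad v x i * a x i * grad G x i)) = v y)"

text \<open>green T a x y = G_T(x,y;a).\<close>
definition green :: "real \<Rightarrow> 'd::finite cond \<Rightarrow> 'd site \<Rightarrow> 'd site \<Rightarrow> real" where
  "green T a x y = (THE G. green_eq T a y G) x"

definition corr_eq :: "real \<Rightarrow> 'd::finite cond \<Rightarrow> real ^ 'd \<Rightarrow> ('d site \<Rightarrow> real) \<Rightarrow> bool" where
  "corr_eq T a \<xi> \<phi> \<longleftrightarrow> bounded (range \<phi>) \<and>
     (\<forall>x. \<phi> x / T - divstar (\<lambda>y i. a y i * (grad \<phi> y i + \<xi> $ i)) x = 0)"

definition corrector :: "real \<Rightarrow> 'd::finite cond \<Rightarrow> real ^ 'd \<Rightarrow> 'd site \<Rightarrow> real" where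
  "corrector T a \<xi> = (THE \<phi>. corr_eq T a \<xi> \<phi>)"

end

theory Submission
  imports Defs
begin



definition Lop :: "real \<Rightarrow> 'd::finite cond \<Rightarrow> ('d site \<Rightarrow> real) \<Rightarrow> 'd site \<Rightarrow> real" where
  "Lop T a u x = u x / T - divstar (\<lambda>y j. a y j * grad u y j) x"

lemma Lop_expand:
  "Lop T a u x = u x / T - (\<Sum>j\<in>UNIV. a x j * (u (x + unitv j) - u x) - a (x - unitv j) j * (u x - u (x - unitv j)))"
  by (simp add: Lop_def divstar_def grad_def)

lemma Lop_lin:
  "Lop T a (\<lambda>x. c1 * u x + c2 * v x) x = c1 * Lop T a u x + c2 * Lop T a v x"
  unfolding Lop_expand
  by (simp add: algebra_simps sum_distrib_left sum.distrib sum_subtractf diff_divide_distrib add_divide_distrib)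

lemma Lop_diff:
  "Lop T a (\<lambda>x. u x - v x) x = Lop T a u x - Lop T a v x"
  using Lop_lin[of T a 1 u "-1" v x] by simp

lemma bounded_range_iff: "bounded (range (u::'a \<Rightarrow> real)) \<longleftrightarrow> (\<exists>K. \<forall>x. \<bar>u x\<bar> \<le> K)"
  by (auto simp: bounded_iff)

lemma maxprin:
  fixes a :: "'d::finite cond"
  assumes T: "T > 0" and a: "\<And>y j. 0 \<le> a y j \<and> a y j \<le> B"
    and ub: "bounded (range u)" and L: "\<And>x. Lop T a u x \<ge> 0"
  shows "u x \<ge> 0"
proof (rule ccontr)
  assume neg: "\<not> u x \<ge> 0"
  from ub obtain K where K: "\<And>y. \<bar>u y\<bar> \<le> K" by (auto simp: bounded_range_iff)
  define m where "m = Inf (range u)"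
  have Kl: "\<And>y. -K \<le> u y" using K by (metis abs_le_iff minus_le_iff)
  have bdd: "bdd_below (range u)" using Kl by (intro bdd_belowI[of _ "-K"]) auto
  have mle: "\<And>y. m \<le> u y" unfolding m_def using bdd by (simp add: cInf_lower)
  have mneg: "m < 0" using mle[of x] neg by simp
  have B0: "B \<ge> 0" using a[of x undefined] by (metis order_trans) 
  define d where "d = real CARD('d)"
  define \<epsilon> where "\<epsilon> = - m / (2 * (1 + 2 * d * B * T))"
  have dpos: "d \<ge> 0" unfolding d_def by simp
  have den: "1 + 2 * d * B * T > 0" using dpos B0 T by (simp add: add_pos_nonneg)
  have epos: "\<epsilon> > 0" unfolding \<epsilon>_def using mneg den by (intro divide_pos_pos) auto
  have "m < m + \<epsilon>" using epos by simp
  then have "\<exists>y\<in>range u. y < m + \<epsilon>" unfolding m_def by (meson UNIV_not_empty bdd cInf_less_iff image_is_empty)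
  then obtain x0 where x0: "u x0 < m + \<epsilon>" by auto
  have t1: "a x0 j * (u (x0 + unitv j) - u x0) - a (x0 - unitv j) j * (u x0 - u (x0 - unitv j)) \<ge> - 2 * B * \<epsilon>" for j
  proof -
    have h1: "u (x0 + unitv j) - u x0 \<ge> - \<epsilon>" using mle[of "x0 + unitv j"] x0 by simp
    have h2: "u (x0 - unitv j) - u x0 \<ge> - \<epsilon>" using mle[of "x0 - unitv j"] x0 by simp
    have "a x0 j * (u (x0 + unitv j) - u x0) \<ge> a x0 j * (- \<epsilon>)"
      using h1 a[of x0 j] by (intro mult_left_mono) auto
    moreover have "a x0 j * (- \<epsilon>) \<ge> B * (-\<epsilon>)" using a[of x0 j] epos by (simp add: mult_right_mono)
    moreover have "a (x0 - unitv j) j * (u (x0 - unitv j) - u x0) \<ge> a (x0 - unitv j) j * (- \<epsilon>)"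
      using h2 a[of "x0 - unitv j" j] by (intro mult_left_mono) auto
    moreover have "a (x0 - unitv j) j * (- \<epsilon>) \<ge> B * (-\<epsilon>)" using a[of "x0 - unitv j" j] epos by (simp add: mult_right_mono)
    ultimately show ?thesis by (simp add: algebra_simps)
  qed
  have "(\<Sum>j\<in>UNIV. a x0 j * (u (x0 + unitv j) - u x0) - a (x0 - unitv j) j * (u x0 - u (x0 - unitv j)))
        \<ge> (\<Sum>j\<in>(UNIV::'d set). - 2 * B * \<epsilon>)"
    by (rule sum_mono) (use t1 in auto)
  also have "(\<Sum>j\<in>(UNIV::'d set). - 2 * B * \<epsilon>) = - 2 * d * B * \<epsilon>" by (simp add: d_def)
  finally have S: "(\<Sum>j\<in>UNIV. a x0 j * (u (x0 + unitv j) - u x0) - a (x0 - unitv j) j * (u x0 - u (x0 - unitv j))) \<ge> - 2 * d * B * \<epsilon>" .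
  have "Lop T a u x0 \<le> u x0 / T + 2 * d * B * \<epsilon>" using S by (simp add: Lop_expand)
  also have "\<dots> < (m + \<epsilon>) / T + 2 * d * B * \<epsilon>" using x0 T by (simp add: divide_strict_right_mono)
  also have "(m + \<epsilon>) / T + 2 * d * B * \<epsilon> = (m + \<epsilon> * (1 + 2 * d * B * T)) / T"
    using T by (simp add: field_simps)
  also have "m + \<epsilon> * (1 + 2 * d * B * T) = m / 2" unfolding \<epsilon>_def using den by (simp add: field_simps)
  also have "m / 2 / T < 0" using mneg T by (simp add: divide_neg_pos)
  finally show False using L[of x0] by simp
qed

lemma uniq_bounded:
  fixes a :: "'d::finite cond"
  assumes T: "T > 0" and a: "\<And>y j. 0 \<le> a y j \<and> a y j \<le> B"
    and ub: "bounded (range u)" and vb: "bounded (range v)" and L: "\<And>x. Lop T a u x = Lop T a v x"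
  shows "u = v"
proof
  fix x
  have b1: "bounded (range (\<lambda>x. u x - v x))" using ub vb
    by (auto simp: bounded_range_iff) (metis abs_triangle_ineq4 add_mono order_trans)
  have b2: "bounded (range (\<lambda>x. v x - u x))" using ub vb
    by (auto simp: bounded_range_iff) (metis abs_triangle_ineq4 add_mono order_trans)
  have "u x - v x \<ge> 0" by (rule maxprin[where a=a and B=B, OF T a b1]) (simp add: Lop_diff L)
  moreover have "v x - u x \<ge> 0" by (rule maxprin[where a=a and B=B, OF T a b2]) (simp add: Lop_diff L)
  ultimately show "u x = v x" by simp
qed

lemma comparison:
  fixes a :: "'d::finite cond"
  assumes T: "T > 0" and a: "\<And>y j. 0 \<le> a y j \<and> a y j \<le> B"
    and ub: "bounded (range u)" and vb: "bounded (range v)" and L: "\<And>x. Lop T a u x \<le> Lop T a v x"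
  shows "u x \<le> v x"
proof -
  have b2: "bounded (range (\<lambda>x. v x - u x))" using ub vb
    by (auto simp: bounded_range_iff) (metis abs_triangle_ineq4 add_mono order_trans)
  have "v x - u x \<ge> 0" by (rule maxprin[where a=a and B=B, OF T a b2]) (simp add: Lop_diff L)
  then show ?thesis by simp
qed




definition Wop :: "'d::finite cond \<Rightarrow> ('d site \<Rightarrow> real) \<Rightarrow> 'd site \<Rightarrow> real" where
  "Wop a u x = (\<Sum>j\<in>UNIV. a x j * u (x + unitv j) + a (x - unitv j) j * u (x - unitv j))"

definition mw :: "real \<Rightarrow> 'd::finite cond \<Rightarrow> 'd site \<Rightarrow> real" where
  "mw T a x = 1 / T + (\<Sum>j\<in>UNIV. a x j + a (x - unitv j) j)"

lemma Lop_mw: "Lop T a u x = mw T a x * u x - Wop a u x"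
  unfolding Lop_expand mw_def Wop_def
  by (simp add: algebra_simps sum_distrib_right sum_distrib_left sum.distrib sum_subtractf)

lemma exist_sol:
  fixes a :: "'d::finite cond"
  assumes T: "T > 0" and a: "\<And>y j. 0 \<le> a y j \<and> a y j \<le> B"
    and f: "\<And>x. \<bar>f x\<bar> \<le> M"
  shows "\<exists>u. (\<forall>x. \<bar>u x\<bar> \<le> T * M) \<and> (\<forall>x. Lop T a u x = f x)"
proof -
  define d where "d = real CARD('d)"
  have B0: "B \<ge> 0" using a[of undefined undefined] by (metis order_trans)
  have M0: "M \<ge> 0" using f[of undefined] by simp
  have mlo: "mw T a x \<ge> 1 / T" for x
    unfolding mw_def using a by (simp add: sum_nonneg add_nonneg_nonneg)
  have mpos: "mw T a x > 0" for x using mlo[of x] T by (meson less_le_trans zero_less_divide_1_iff)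
  have mhi: "mw T a x \<le> 1 / T + 2 * d * B" for x
  proof -
    have "(\<Sum>j\<in>UNIV. a x j + a (x - unitv j) j) \<le> (\<Sum>j\<in>(UNIV::'d set). 2 * B)"
    proof (rule sum_mono)
      fix j
      show "a x j + a (x - unitv j) j \<le> 2 * B" using a[of x j] a[of "x - unitv j" j] by linarith
    qed
    then show ?thesis unfolding mw_def d_def by simp
  qed
  define \<kappa> where "\<kappa> = 1 - 1 / (1 + 2 * d * B * T)"
  have dB: "d * B * T \<ge> 0" unfolding d_def using B0 T by simp
  have k0: "0 \<le> \<kappa>" and k1: "\<kappa> < 1" unfolding \<kappa>_def using dB by (auto simp: field_simps)
  define \<Phi> where "\<Phi> u x = (f x + Wop a u x) / mw T a x" for u x
  have Wdiff: "\<bar>Wop a u x - Wop a v x\<bar> \<le> (mw T a x - 1 / T) * \<delta>"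
    if "\<And>y. \<bar>u y - v y\<bar> \<le> \<delta>" for u v x \<delta>
  proof -
    have "\<bar>Wop a u x - Wop a v x\<bar> = \<bar>(\<Sum>j\<in>UNIV. a x j * (u (x + unitv j) - v (x + unitv j)) + a (x - unitv j) j * (u (x - unitv j) - v (x - unitv j)))\<bar>"
      unfolding Wop_def sum_subtractf[symmetric] by (rule arg_cong[where f=abs], rule sum.cong) (simp_all add: algebra_simps)
    also have "\<dots> \<le> (\<Sum>j\<in>UNIV. \<bar>a x j * (u (x + unitv j) - v (x + unitv j)) + a (x - unitv j) j * (u (x - unitv j) - v (x - unitv j))\<bar>)"
      by (rule sum_abs)
    also have "\<dots> \<le> (\<Sum>j\<in>UNIV. a x j * \<delta> + a (x - unitv j) j * \<delta>)"
    proof (rule sum_mono)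
      fix j
      have "\<bar>a x j * (u (x + unitv j) - v (x + unitv j))\<bar> \<le> a x j * \<delta>"
        unfolding abs_mult using that[of "x + unitv j"] a[of x j] by (intro mult_mono) auto
      moreover have "\<bar>a (x - unitv j) j * (u (x - unitv j) - v (x - unitv j))\<bar> \<le> a (x - unitv j) j * \<delta>"
        unfolding abs_mult using that[of "x - unitv j"] a[of "x - unitv j" j] by (intro mult_mono) auto
      ultimately show "\<bar>a x j * (u (x + unitv j) - v (x + unitv j)) + a (x - unitv j) j * (u (x - unitv j) - v (x - unitv j))\<bar>
        \<le> a x j * \<delta> + a (x - unitv j) j * \<delta>" by (rule order_trans[OF abs_triangle_ineq add_mono])
    qed
    also have "\<dots> = (mw T a x - 1 / T) * \<delta>" unfolding mw_def by (simp add: sum_distrib_left algebra_simps)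
    finally show ?thesis .
  qed
  have contr: "\<bar>\<Phi> u x - \<Phi> v x\<bar> \<le> \<kappa> * \<delta>" if "\<And>y. \<bar>u y - v y\<bar> \<le> \<delta>" for u v x \<delta>
  proof -
    have d0: "\<delta> \<ge> 0" using that[of x] by linarith
    have "\<Phi> u x - \<Phi> v x = (Wop a u x - Wop a v x) / mw T a x"
      unfolding \<Phi>_def using mpos[of x] by (simp add: field_simps)
    then have "\<bar>\<Phi> u x - \<Phi> v x\<bar> = \<bar>Wop a u x - Wop a v x\<bar> / mw T a x" using mpos[of x] by simp
    also have "\<dots> \<le> (mw T a x - 1 / T) * \<delta> / mw T a x"
      using Wdiff[OF that] mpos[of x] by (simp add: divide_right_mono)
    also have "\<dots> = (1 - 1 / (T * mw T a x)) * \<delta>" using mpos[of x] T by (simp add: field_simps)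
    also have "\<dots> \<le> \<kappa> * \<delta>"
    proof (rule mult_right_mono[OF _ d0])
      have "T * mw T a x \<le> 1 + 2 * d * B * T" using mhi[of x] T by (simp add: field_simps)
      moreover have "T * mw T a x > 0" using mpos[of x] T by simp
      ultimately have "1 / (1 + 2 * d * B * T) \<le> 1 / (T * mw T a x)"
        by (simp add: frac_le)
      then show "1 - 1 / (T * mw T a x) \<le> \<kappa>" unfolding \<kappa>_def by simp
    qed
    finally show ?thesis .
  qed
  define U where "U n = (\<Phi> ^^ n) (\<lambda>_. 0)" for n
  have U0: "U 0 = (\<lambda>_. 0)" and US: "U (Suc n) = \<Phi> (U n)" for n unfolding U_def by auto
  have Ubd: "\<bar>U n x\<bar> \<le> T * M" for n x
  proof (induction n arbitrary: x)
    case 0 then show ?case using M0 T by (simp add: U0)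
  next
    case (Suc n)
    have "\<bar>Wop a (U n) x\<bar> \<le> (mw T a x - 1 / T) * (T * M)"
      using Wdiff[of "U n" "\<lambda>_. 0" "T * M" x] Suc by (simp add: Wop_def)
    then have "\<bar>f x + Wop a (U n) x\<bar> \<le> M + (mw T a x - 1 / T) * (T * M)"
      using f[of x] by (meson abs_triangle_ineq add_mono order_trans)
    also have "\<dots> = mw T a x * (T * M)" using T by (simp add: field_simps)
    finally have "\<bar>f x + Wop a (U n) x\<bar> / mw T a x \<le> T * M"
      using mpos[of x] by (simp add: divide_le_eq mult.commute)
    then show ?case using mpos[of x] by (simp add: US \<Phi>_def)
  qed
  have Udiff: "\<bar>U (Suc n) x - U n x\<bar> \<le> \<kappa> ^ n * (2 * T * M)" for n x
  proof (induction n arbitrary: x)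
    case 0 then show ?case using Ubd[of 1 x] by (simp add: U0)
  next
    case (Suc n)
    have "\<bar>\<Phi> (U (Suc n)) x - \<Phi> (U n) x\<bar> \<le> \<kappa> * (\<kappa> ^ n * (2 * T * M))"
      by (rule contr) (use Suc in auto)
    then show ?case by (simp add: US[of "Suc n"] US[of n])
  qed
  have summ: "summable (\<lambda>k. U (Suc k) x - U k x)" for x
  proof (rule summable_comparison_test)
    show "\<exists>N. \<forall>n\<ge>N. norm (U (Suc n) x - U n x) \<le> \<kappa> ^ n * (2 * T * M)" using Udiff by auto
    show "summable (\<lambda>n. \<kappa> ^ n * (2 * T * M))" using k0 k1 by (intro summable_mult2 summable_geometric) simp
  qed
  define L where "L x = (\<Sum>k. U (Suc k) x - U k x)" for x
  have conv: "(\<lambda>n. U n x) \<longlonglongrightarrow> L x" for x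
  proof -
    have "(\<lambda>n. \<Sum>k<n. U (Suc k) x - U k x) \<longlonglongrightarrow> L x" unfolding L_def using summ by (rule summable_LIMSEQ)
    moreover have "(\<Sum>k<n. U (Suc k) x - U k x) = U n x" for n
      using sum_lessThan_telescope[of "\<lambda>k. U k x" n] by (simp add: U0)
    ultimately show ?thesis by simp
  qed
  have Lbd: "\<bar>L x\<bar> \<le> T * M" for x
    by (rule tendsto_le[OF sequentially_bot tendsto_const tendsto_rabs[OF conv]]) (use Ubd in auto)
  have fixp: "L x = \<Phi> L x" for x
  proof -
    have "(\<lambda>n. U (Suc n) x) \<longlonglongrightarrow> L x" using conv[of x] by (rule LIMSEQ_Suc)
    moreover have "(\<lambda>n. U (Suc n) x) \<longlonglongrightarrow> \<Phi> L x"
      unfolding US \<Phi>_def Wop_def by (intro tendsto_intros conv) (use mpos[of x] in auto)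
    ultimately show ?thesis by (rule LIMSEQ_unique)
  qed
  have "Lop T a L x = f x" for x
  proof -
    have "Lop T a L x = mw T a x * \<Phi> L x - Wop a L x" by (simp add: Lop_mw fixp[symmetric])
    also have "\<dots> = f x" unfolding \<Phi>_def using mpos[of x] by simp
    finally show ?thesis .
  qed
  then show ?thesis using Lbd by blast
qed




lemma unitv_nth: "unitv j $ k = (if k = j then 1 else 0)"
  by (simp add: unitv_def axis_def)

definition Nd :: "'d::finite site \<Rightarrow> 'd site \<Rightarrow> nat" where
  "Nd y x = (\<Sum>k\<in>UNIV. nat \<bar>x $ k - y $ k\<bar>)"

lemma Nd_step:
  fixes y x :: "'d::finite site"
  shows "Nd y x \<le> Nd y (x + unitv j) + 1" "Nd y x \<le> Nd y (x - unitv j) + 1"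
proof -
  have "Nd y x \<le> (\<Sum>k\<in>UNIV. nat \<bar>(x + unitv j) $ k - y $ k\<bar> + (if k = j then 1 else 0))"
    unfolding Nd_def by (rule sum_mono) (auto simp: unitv_nth)
  also have "\<dots> = Nd y (x + unitv j) + 1" unfolding Nd_def by (simp add: sum.distrib)
  finally show "Nd y x \<le> Nd y (x + unitv j) + 1" .
  have "Nd y x \<le> (\<Sum>k\<in>UNIV. nat \<bar>(x - unitv j) $ k - y $ k\<bar> + (if k = j then 1 else 0))"
    unfolding Nd_def by (rule sum_mono) (auto simp: unitv_nth)
  also have "\<dots> = Nd y (x - unitv j) + 1" unfolding Nd_def by (simp add: sum.distrib)
  finally show "Nd y x \<le> Nd y (x - unitv j) + 1" .
qed

lemma pow_step:
  fixes \<rho> :: real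
  assumes "0 < \<rho>" "\<rho> \<le> 1" "n \<le> m + 1"
  shows "\<rho> ^ m \<le> \<rho> ^ n / \<rho>"
proof -
  have "\<rho> ^ (m + 1) \<le> \<rho> ^ n" using assms by (intro power_decreasing) auto
  then show ?thesis using assms by (simp add: field_simps)
qed

lemma barrier:
  fixes a :: "'d::finite cond"
  assumes T: "T > 0" and a: "\<And>y j. 0 \<le> a y j \<and> a y j \<le> B"
    and rho: "\<rho> = 1 / (1 + 1 / (4 * real CARD('d) * (B + 1) * T))"
  shows "Lop T a (\<lambda>x. \<rho> ^ Nd y x) x \<ge> \<rho> ^ Nd y x / (2 * T)"
proof -
  define d where "d = real CARD('d)"
  define b where "b x = \<rho> ^ Nd y x" for x
  have B0: "B \<ge> 0" using a[of undefined undefined] by (metis order_trans)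
  have d1: "d \<ge> 1" unfolding d_def by (simp add: Suc_leI)
  define c where "c = 1 / (4 * d * (B + 1) * T)"
  have cpos: "c > 0" unfolding c_def using d1 B0 T by simp
  have r: "\<rho> = 1 / (1 + c)" unfolding rho c_def d_def ..
  have r0: "\<rho> > 0" and r1: "\<rho> \<le> 1" using cpos r by auto
  have rinv: "1 / \<rho> - 1 = c" using r cpos by simp
  have bnb: "b (x + unitv j) \<le> b x / \<rho>" "b (x - unitv j) \<le> b x / \<rho>" for x j
    unfolding b_def using Nd_step[of y x j] by (auto intro!: pow_step r0 r1)
  have b0: "b x \<ge> 0" for x unfolding b_def using r0 by simp
  have trm: "a x j * (b (x + unitv j) - b x) - a (x - unitv j) j * (b x - b (x - unitv j)) \<le> 2 * B * (b x * c)" for j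
  proof -
    have i1: "1 / \<rho> = 1 + c" using rinv by simp
    have i2: "b x / \<rho> = b x * (1 / \<rho>)" by simp
    have i3: "b x / \<rho> = b x + b x * c" using i1 i2 by (simp add: algebra_simps)
    have e1: "b (x + unitv j) - b x \<le> b x * c" using bnb(1)[of x j] i3 by linarith
    have e2: "b (x - unitv j) - b x \<le> b x * c" using bnb(2)[of x j] i3 by linarith
    have bc: "b x * c \<ge> 0" using b0 cpos by simp
    have "a x j * (b (x + unitv j) - b x) \<le> B * (b x * c)"
      using e1 a[of x j] bc by (meson mult_left_mono mult_right_mono order_trans) 
    moreover have "a (x - unitv j) j * (b (x - unitv j) - b x) \<le> B * (b x * c)"
      using e2 a[of "x - unitv j" j] bc by (meson mult_left_mono mult_right_mono order_trans)
    ultimately show ?thesis by (simp add: algebra_simps)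
  qed
  have "(\<Sum>j\<in>UNIV. a x j * (b (x + unitv j) - b x) - a (x - unitv j) j * (b x - b (x - unitv j)))
     \<le> (\<Sum>j\<in>(UNIV::'d set). 2 * B * (b x * c))" by (rule sum_mono) (rule trm)
  also have "\<dots> = d * 2 * B * (b x * c)" by (simp add: d_def)
  also have "\<dots> = b x * (B / (B + 1)) / (2 * T)" proof -
    define E where "E = B + 1"
    have "E > 0" using B0 unfolding E_def by simp
    moreover have "d > 0" using d1 by simp
    moreover have "c = 1 / (4 * d * E * T)" unfolding c_def E_def ..
    ultimately show ?thesis unfolding E_def[symmetric] using T by (simp add: field_simps)
  qed
  also have "\<dots> \<le> b x / (2 * T)" proof -
    have q: "B / (B + 1) \<le> 1" using B0 by simp
    have "b x * (B / (B + 1)) \<le> b x" using mult_left_le[OF q b0[of x]] .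
    then show ?thesis by (intro divide_right_mono) (use T in auto)
  qed
  finally have S: "(\<Sum>j\<in>UNIV. a x j * (b (x + unitv j) - b x) - a (x - unitv j) j * (b x - b (x - unitv j))) \<le> b x / (2 * T)" .
  have "Lop T a b x \<ge> b x / T - b x / (2 * T)" unfolding Lop_expand using S by simp
  moreover have "b x / T - b x / (2 * T) = b x / (2 * T)" using T by (simp add: field_simps)
  ultimately show ?thesis unfolding b_def by simp
qed




definition delta :: "'d::finite site \<Rightarrow> 'd site \<Rightarrow> real" where
  "delta y x = (if x = y then 1 else 0)"

lemma Lop_scale: "Lop T a (\<lambda>x. c * u x) x = c * Lop T a u x"
  using Lop_lin[of T a c u 0 u x] by simp

lemma Lop_neg: "Lop T a (\<lambda>x. - u x) x = - Lop T a u x"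
  using Lop_scale[of T a "-1" u x] by simp

definition rhoc :: "real \<Rightarrow> real \<Rightarrow> 'd::finite itself \<Rightarrow> real" where
  "rhoc B T _ = 1 / (1 + 1 / (4 * real CARD('d) * (B + 1) * T))"

lemma rhoc_props:
  assumes "T > 0" "B \<ge> 0"
  shows "rhoc B T (TYPE('d::finite)) > 0" "rhoc B T (TYPE('d)) < 1"
proof -
  define c where "c = 1 / (4 * real CARD('d) * (B + 1) * T)"
  have c: "c > 0" unfolding c_def using assms by simp
  have "rhoc B T (TYPE('d)) = 1 / (1 + c)" unfolding rhoc_def c_def ..
  then show "rhoc B T (TYPE('d::finite)) > 0" "rhoc B T (TYPE('d)) < 1"
    using c by auto
qed

lemma green_decay:
  fixes a :: "'d::finite cond"
  assumes T: "T > 0" and a: "\<And>y j. 0 \<le> a y j \<and> a y j \<le> B"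
    and Gb: "bounded (range G)" and L: "\<And>x. Lop T a G x = delta y x"
  shows "\<bar>G x\<bar> \<le> 2 * T * rhoc B T (TYPE('d)) ^ Nd y x"
proof -
  define \<rho> where "\<rho> = rhoc B T (TYPE('d))"
  have B0: "B \<ge> 0" using a[of undefined undefined] by (metis order_trans)
  have r0: "\<rho> > 0" and r1: "\<rho> < 1" unfolding \<rho>_def using rhoc_props[OF T B0] by auto
  define v where "v x = 2 * T * \<rho> ^ Nd y x" for x
  have p1: "\<rho> ^ n \<le> 1" for n using r0 r1 by (intro power_le_one) auto
  have p0: "\<rho> ^ n \<ge> 0" for n using r0 by simp
  have vb: "bounded (range v)" unfolding bounded_range_iff
  proof (intro exI allI)
    fix x
    have "\<bar>v x\<bar> = 2 * T * \<rho> ^ Nd y x" unfolding v_def using T p0[of "Nd y x"] by simp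
    also have "\<dots> \<le> 2 * T * 1" using T p1[of "Nd y x"] by (intro mult_left_mono) auto
    finally show "\<bar>v x\<bar> \<le> 2 * T" by simp
  qed
  have bar: "Lop T a (\<lambda>x. \<rho> ^ Nd y x) x \<ge> \<rho> ^ Nd y x / (2 * T)" for x
    by (rule barrier[OF T a]) (simp add: \<rho>_def rhoc_def)
  have Lv: "Lop T a v x \<ge> \<rho> ^ Nd y x" for x
  proof -
    have "Lop T a v x = 2 * T * Lop T a (\<lambda>x. \<rho> ^ Nd y x) x" unfolding v_def by (rule Lop_scale)
    also have "\<dots> \<ge> 2 * T * (\<rho> ^ Nd y x / (2 * T))" using bar[of x] T by (intro mult_left_mono) auto
    finally show ?thesis using T by simp
  qed
  have Nyy: "Nd y y = 0" by (simp add: Nd_def)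
  have dl: "delta y x \<le> Lop T a v x" for x
  proof (cases "x = y")
    case True then show ?thesis using Lv[of x] Nyy by (simp add: delta_def)
  next
    case False then show ?thesis using Lv[of x] p0[of "Nd y x"] by (simp add: delta_def)
  qed
  have "G x \<le> v x" by (rule comparison[where a=a and B=B, OF T a Gb vb]) (simp add: L dl)
  moreover have "- G x \<le> v x"
  proof (rule comparison[where a=a and B=B, OF T a _ vb])
    show "bounded (range (\<lambda>x. - G x))" using Gb by (auto simp: bounded_range_iff)
    show "Lop T a (\<lambda>x. - G x) x \<le> Lop T a v x" for x
    proof -
      have "Lop T a (\<lambda>x. - G x) x = - delta y x" by (simp add: Lop_neg L)
      also have "\<dots> \<le> 0" by (simp add: delta_def)
      also have "0 \<le> \<rho> ^ Nd y x" by (rule p0)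
      also have "\<dots> \<le> Lop T a v x" by (rule Lv)
      finally show ?thesis .
    qed
  qed
  ultimately show ?thesis unfolding v_def \<rho>_def by linarith
qed

lemma summ_geom_nat:
  fixes \<rho> :: real assumes "0 \<le> \<rho>" "\<rho> < 1"
  shows "(\<lambda>n::nat. \<rho> ^ n) summable_on UNIV"
  using assms by (subst summable_on_UNIV_nonneg_real_iff) (auto intro: summable_geometric)

lemma summ_geom_int:
  fixes \<rho> :: real assumes r: "0 \<le> \<rho>" "\<rho> < 1"
  shows "(\<lambda>m::int. \<rho> ^ nat \<bar>m - c\<bar>) summable_on UNIV"
proof -
  have s1: "(\<lambda>m::int. \<rho> ^ nat \<bar>m\<bar>) summable_on range int"
  proof -
    have "((\<lambda>m::int. \<rho> ^ nat \<bar>m\<bar>) \<circ> int) summable_on UNIV"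
      using summ_geom_nat[OF r] by (simp add: o_def)
    then show ?thesis by (subst summable_on_reindex) auto
  qed
  have s2: "(\<lambda>m::int. \<rho> ^ nat \<bar>m\<bar>) summable_on range (\<lambda>n. - int n)"
  proof -
    have "((\<lambda>m::int. \<rho> ^ nat \<bar>m\<bar>) \<circ> (\<lambda>n. - int n)) summable_on UNIV"
      using summ_geom_nat[OF r] by (simp add: o_def)
    then show ?thesis by (subst summable_on_reindex) (auto simp: inj_on_def)
  qed
  have U: "range int \<union> range (\<lambda>n. - int n) = (UNIV :: int set)"
  proof -
    have "m \<in> range int \<union> range (\<lambda>n. - int n)" for m :: int
    proof (cases "m \<ge> 0")
      case True then show ?thesis by (metis UnI1 nonneg_int_cases rangeI)
    next
      case False then have "m = - int (nat (- m))" by simp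
      then show ?thesis by blast
    qed
    then show ?thesis by blast
  qed
  have s: "(\<lambda>m::int. \<rho> ^ nat \<bar>m\<bar>) summable_on UNIV"
    using summable_on_union[OF s1 s2] U by simp
  have "(\<lambda>m::int. \<rho> ^ nat \<bar>m - c\<bar>) summable_on ((\<lambda>m. m + c) ` UNIV)"
  proof (subst summable_on_reindex)
    show "inj_on (\<lambda>m. m + c) UNIV" by (simp add: inj_on_def)
    show "((\<lambda>m::int. \<rho> ^ nat \<bar>m - c\<bar>) \<circ> (\<lambda>m. m + c)) summable_on UNIV" using s by (simp add: o_def)
  qed
  moreover have "(\<lambda>m. m + c) ` UNIV = (UNIV :: int set)" by (metis surj_def add_diff_cancel diff_add_cancel) 
  ultimately show ?thesis by simp
qed

lemma summ_Nd:
  fixes \<rho> :: real and y :: "'d::finite site" assumes r: "0 \<le> \<rho>" "\<rho> < 1"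
  shows "(\<lambda>x. \<rho> ^ Nd y x) summable_on UNIV"
proof -
  define f where "f k m = \<rho> ^ nat \<bar>m - y $ k\<bar>" for k m
  have "Infinite_Set_Sum.abs_summable_on (\<lambda>g. \<Prod>k\<in>UNIV. f k (g k)) (PiE UNIV (\<lambda>_. UNIV))"
  proof (rule abs_summable_on_prod_PiE)
    fix k :: 'd
    have "(\<lambda>x. norm (f k x)) summable_on UNIV"
      unfolding f_def using summ_geom_int[OF r, of "y $ k"] r by simp
    then show "Infinite_Set_Sum.abs_summable_on (f k) UNIV" by (rule abs_summable_equivalent[THEN iffD1])
  qed auto
  then have "(\<lambda>g. norm (\<Prod>k\<in>UNIV. f k (g k))) summable_on UNIV"
  proof -
    have "PiE UNIV (\<lambda>_. UNIV) = (UNIV :: ('d \<Rightarrow> int) set)" by (auto simp: PiE_def extensional_def)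
    with \<open>Infinite_Set_Sum.abs_summable_on (\<lambda>g. \<Prod>k\<in>UNIV. f k (g k)) (PiE UNIV (\<lambda>_. UNIV))\<close>
    show ?thesis by (intro abs_summable_equivalent[THEN iffD2]) simp
  qed
  then have s: "(\<lambda>g. \<Prod>k\<in>UNIV. f k (g k)) summable_on UNIV"
    by (rule summable_on_iff_abs_summable_on_real[THEN iffD2])
  have sv: "surj (vec_nth :: 'd site \<Rightarrow> ('d \<Rightarrow> int))" by (rule surjI[where f=vec_lambda]) (simp add: vec_lambda_inverse)
  have iv: "inj (vec_nth :: 'd site \<Rightarrow> ('d \<Rightarrow> int))" by (rule injI) (simp add: vec_nth_inject)
  have "(\<lambda>g. \<Prod>k\<in>UNIV. f k (g k)) summable_on (vec_nth ` UNIV)"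
    using s sv by simp
  then have "((\<lambda>g. \<Prod>k\<in>UNIV. f k (g k)) \<circ> vec_nth) summable_on UNIV"
    using summable_on_reindex[OF iv] by blast
  moreover have "((\<lambda>g. \<Prod>k\<in>UNIV. f k (g k)) \<circ> vec_nth) = (\<lambda>x. \<rho> ^ Nd y x)"
  proof
    fix x :: "'d site"
    show "((\<lambda>g. \<Prod>k\<in>UNIV. f k (g k)) \<circ> vec_nth) x = \<rho> ^ Nd y x"
      unfolding Nd_def power_sum o_def f_def ..
  qed
  ultimately show ?thesis by simp
qed

lemma summ_bounded_mult:
  fixes u v :: "'a \<Rightarrow> real"
  assumes "u summable_on A" "\<And>x. \<bar>v x\<bar> \<le> K"
  shows "(\<lambda>x. v x * u x) summable_on A"
proof -
  have "(\<lambda>x. norm (u x)) summable_on A" using assms(1) by (rule summable_on_iff_abs_summable_on_real[THEN iffD1])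
  then have "(\<lambda>x. K * norm (u x)) summable_on A" by (rule summable_on_cmult_right)
  then have "(\<lambda>x. norm (v x * u x)) summable_on A"
  proof (rule Infinite_Sum.abs_summable_on_comparison_test')
    fix x
    have K0: "K \<ge> 0" using assms(2)[of x] by linarith
    show "norm (v x * u x) \<le> K * norm (u x)"
      unfolding norm_mult real_norm_def abs_mult by (rule mult_right_mono) (use assms(2)[of x] in auto)
  qed
  then show ?thesis by (rule summable_on_iff_abs_summable_on_real[THEN iffD2])
qed

lemma green_summable:
  fixes a :: "'d::finite cond"
  assumes T: "T > 0" and a: "\<And>y j. 0 \<le> a y j \<and> a y j \<le> B"
    and Gb: "bounded (range G)" and L: "\<And>x. Lop T a G x = delta y x"
  shows "G summable_on UNIV"
proof -
  define \<rho> where "\<rho> = rhoc B T (TYPE('d))"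
  have B0: "B \<ge> 0" using a[of undefined undefined] by (metis order_trans)
  have r0: "\<rho> > 0" and r1: "\<rho> < 1" unfolding \<rho>_def using rhoc_props[OF T B0] by auto
  have "(\<lambda>x. 2 * T * \<rho> ^ Nd y x) summable_on UNIV"
    using summ_Nd[of \<rho> y] r0 r1 by (intro summable_on_cmult_right) auto
  then have "(\<lambda>x. norm (G x)) summable_on UNIV"
  proof (rule Infinite_Sum.abs_summable_on_comparison_test')
    fix x
    show "norm (G x) \<le> 2 * T * \<rho> ^ Nd y x"
      using green_decay[where a=a and B=B and G=G and y=y, OF T a Gb L, of x] unfolding \<rho>_def[symmetric] real_norm_def .
  qed
  then show ?thesis by (rule summable_on_iff_abs_summable_on_real[THEN iffD2])
qed




lemma summable_shift:
  fixes u :: "'d::finite site \<Rightarrow> real"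
  assumes "u summable_on UNIV"
  shows "(\<lambda>x. u (x + c)) summable_on UNIV"
proof -
  have "bij_betw (\<lambda>x. x + c) UNIV UNIV" by (rule bij_betwI[of _ _ _ "\<lambda>x. x - c"]) auto
  then show ?thesis using summable_on_reindex_bij_betw[of "\<lambda>x. x + c" UNIV UNIV u] assms by simp
qed

lemma infsum_shift:
  fixes u :: "'d::finite site \<Rightarrow> real"
  shows "(\<Sum>\<^sub>\<infinity>x. u (x + c)) = (\<Sum>\<^sub>\<infinity>x. u x)"
proof -
  have "bij_betw (\<lambda>x. x + c) UNIV UNIV" by (rule bij_betwI[of _ _ _ "\<lambda>x. x - c"]) auto
  then show ?thesis by (rule infsum_reindex_bij_betw)
qed

lemma summable_on_diff':
  fixes f g :: "'a \<Rightarrow> real"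
  assumes "f summable_on A" "g summable_on A"
  shows "(\<lambda>x. f x - g x) summable_on A"
  using summable_on_add[OF assms(1) summable_on_uminus[THEN iffD2, OF assms(2)]] by simp

lemma infsum_diff':
  fixes f g :: "'a \<Rightarrow> real"
  assumes "f summable_on A" "g summable_on A"
  shows "infsum (\<lambda>x. f x - g x) A = infsum f A - infsum g A"
  using infsum_add[OF assms(1) summable_on_uminus[THEN iffD2, OF assms(2)]] by (simp add: infsum_uminus)

lemma infsum_sum_fin:
  fixes f :: "'i \<Rightarrow> 'a \<Rightarrow> real"
  assumes "finite I" "\<And>j. j \<in> I \<Longrightarrow> f j summable_on A"
  shows "(\<lambda>x. \<Sum>j\<in>I. f j x) summable_on A \<and> infsum (\<lambda>x. \<Sum>j\<in>I. f j x) A = (\<Sum>j\<in>I. infsum (f j) A)"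
  using assms
proof (induction I rule: finite_induct)
  case empty then show ?case by simp
next
  case (insert j I)
  then have s: "(\<lambda>x. \<Sum>j\<in>I. f j x) summable_on A" and e: "infsum (\<lambda>x. \<Sum>j\<in>I. f j x) A = (\<Sum>j\<in>I. infsum (f j) A)"
    by auto
  have fj: "f j summable_on A" using insert by auto
  show ?case using insert summable_on_add[OF fj s] infsum_add[OF fj s] e by simp
qed

lemma infsum_single:
  fixes f :: "'a \<Rightarrow> real"
  shows "(\<Sum>\<^sub>\<infinity>x. if x = p then f x else 0) = f p"
proof -
  have "(\<Sum>\<^sub>\<infinity>x. if x = p then f x else 0) = (\<Sum>\<^sub>\<infinity>x\<in>{p}. if x = p then f x else 0)"
    by (rule infsum_cong_neutral) auto
  then show ?thesis by simp
qed

lemma summable_single: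
  fixes f :: "'a \<Rightarrow> real"
  shows "(\<lambda>x. if x = p then f x else 0) summable_on UNIV"
proof -
  have "(\<lambda>x. if x = p then f x else 0) summable_on {p}" by simp
  moreover have "(\<lambda>x. if x = p then f x else 0) summable_on UNIV \<longleftrightarrow> (\<lambda>x. if x = p then f x else 0) summable_on {p}"
    by (rule summable_on_cong_neutral) auto
  ultimately show ?thesis by simp
qed

lemma sq_le_infsum:
  fixes v :: "'a \<Rightarrow> real"
  assumes "(\<lambda>x. (v x)\<^sup>2) summable_on UNIV"
  shows "(v p)\<^sup>2 \<le> (\<Sum>\<^sub>\<infinity>x. (v x)\<^sup>2)"
proof -
  have "(\<Sum>\<^sub>\<infinity>x\<in>{p}. (v x)\<^sup>2) \<le> (\<Sum>\<^sub>\<infinity>x. (v x)\<^sup>2)"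
    by (rule infsum_mono_neutral) (use assms in auto)
  then show ?thesis by simp
qed

lemma l2_bounded:
  fixes v :: "'a \<Rightarrow> real"
  assumes "(\<lambda>x. (v x)\<^sup>2) summable_on UNIV"
  shows "\<bar>v p\<bar> \<le> 1 + (\<Sum>\<^sub>\<infinity>x. (v x)\<^sup>2)"
proof -
  have h: "0 \<le> (\<bar>v p\<bar> - 1)\<^sup>2" by simp
  have h2: "(\<bar>v p\<bar> - 1)\<^sup>2 = \<bar>v p\<bar> * \<bar>v p\<bar> - 2 * \<bar>v p\<bar> + 1" by (simp add: power2_eq_square algebra_simps)
  have h3: "\<bar>v p\<bar> * \<bar>v p\<bar> = (v p)\<^sup>2" by (simp add: power2_eq_square abs_mult_self)
  have h4: "0 \<le> (v p)\<^sup>2" by simp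
  have "\<bar>v p\<bar> \<le> 1 + (v p)\<^sup>2" using h h2 h3 h4 by linarith
  also have "\<dots> \<le> 1 + (\<Sum>\<^sub>\<infinity>x. (v x)\<^sup>2)" using sq_le_infsum[OF assms] by simp
  finally show ?thesis .
qed

lemma sbp:
  fixes a :: "'d::finite cond"
  assumes a: "\<And>y j. 0 \<le> a y j \<and> a y j \<le> B" and u: "u summable_on UNIV" and v: "\<And>x. \<bar>v x\<bar> \<le> K"
  shows "(\<Sum>\<^sub>\<infinity>x. u x * v x / T) + (\<Sum>\<^sub>\<infinity>x. (\<Sum>i\<in>UNIV. grad v x i * a x i * grad u x i))
         = (\<Sum>\<^sub>\<infinity>x. v x * Lop T a u x)"
proof -
  define h where "h j x = a x j * grad u x j" for j x
  have ab: "\<bar>a x j\<bar> \<le> B" for x j using a[of x j] by simp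
  have gs: "(\<lambda>x. grad u x j) summable_on UNIV" for j
    unfolding grad_def by (rule summable_on_diff'[OF summable_shift[OF u] u])
  have hs: "h j summable_on UNIV" for j
    unfolding h_def by (rule summ_bounded_mult[OF gs ab])
  have hs': "(\<lambda>x. h j (x - unitv j)) summable_on UNIV" for j
    using summable_shift[OF hs[of j], of "- unitv j"] by simp
  have s1: "(\<lambda>x. v (x + unitv j) * h j x) summable_on UNIV" for j
    by (rule summ_bounded_mult[OF hs v])
  have s2: "(\<lambda>x. v x * h j x) summable_on UNIV" for j
    by (rule summ_bounded_mult[OF hs v])
  have s3: "(\<lambda>x. v x * h j (x - unitv j)) summable_on UNIV" for j
    by (rule summ_bounded_mult[OF hs' v])
  have su: "(\<lambda>x. v x * u x) summable_on UNIV" by (rule summ_bounded_mult[OF u v])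
  have e1: "(\<Sum>\<^sub>\<infinity>x. v (x + unitv j) * h j x) = (\<Sum>\<^sub>\<infinity>x. v x * h j (x - unitv j))" for j
    using infsum_shift[of "\<lambda>x. v (x + unitv j) * h j x" "- unitv j"] by simp
  have "(\<Sum>\<^sub>\<infinity>x. (\<Sum>i\<in>UNIV. grad v x i * a x i * grad u x i))
      = (\<Sum>\<^sub>\<infinity>x. (\<Sum>i\<in>UNIV. v (x + unitv i) * h i x - v x * h i x))"
    unfolding h_def grad_def by (simp add: algebra_simps)
  also have "\<dots> = (\<Sum>i\<in>UNIV. (\<Sum>\<^sub>\<infinity>x. v (x + unitv i) * h i x - v x * h i x))"
    using infsum_sum_fin[of UNIV "\<lambda>i x. v (x + unitv i) * h i x - v x * h i x" UNIV]
    using summable_on_diff'[OF s1 s2] by auto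
  also have "\<dots> = (\<Sum>i\<in>UNIV. (\<Sum>\<^sub>\<infinity>x. v x * h i (x - unitv i) - v x * h i x))"
    by (rule sum.cong) (simp_all add: infsum_diff'[OF s1 s2] infsum_diff'[OF s3 s2] e1)
  also have "\<dots> = (\<Sum>\<^sub>\<infinity>x. (\<Sum>i\<in>UNIV. v x * h i (x - unitv i) - v x * h i x))"
    using infsum_sum_fin[of UNIV "\<lambda>i x. v x * h i (x - unitv i) - v x * h i x" UNIV]
    using summable_on_diff'[OF s3 s2] by auto
  finally have P: "(\<Sum>\<^sub>\<infinity>x. (\<Sum>i\<in>UNIV. grad v x i * a x i * grad u x i))
      = (\<Sum>\<^sub>\<infinity>x. (\<Sum>i\<in>UNIV. v x * h i (x - unitv i) - v x * h i x))" .
  have sP: "(\<lambda>x. \<Sum>i\<in>UNIV. v x * h i (x - unitv i) - v x * h i x) summable_on UNIV"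
    using infsum_sum_fin[of UNIV "\<lambda>i x. v x * h i (x - unitv i) - v x * h i x" UNIV]
    using summable_on_diff'[OF s3 s2] by auto
  have sQ: "(\<lambda>x. u x * v x / T) summable_on UNIV"
    using summable_on_cmult_left[OF su, of "1 / T"] by (simp add: mult.commute)
  have "(\<Sum>\<^sub>\<infinity>x. u x * v x / T) + (\<Sum>\<^sub>\<infinity>x. (\<Sum>i\<in>UNIV. v x * h i (x - unitv i) - v x * h i x))
     = (\<Sum>\<^sub>\<infinity>x. u x * v x / T + (\<Sum>i\<in>UNIV. v x * h i (x - unitv i) - v x * h i x))"
    using infsum_add[OF sQ sP] by simp
  also have "\<dots> = (\<Sum>\<^sub>\<infinity>x. v x * Lop T a u x)"
  proof (rule infsum_cong)
    fix x
    have "Lop T a u x = u x / T - (\<Sum>i\<in>UNIV. h i x - h i (x - unitv i))"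
      unfolding Lop_def divstar_def h_def ..
    then show "u x * v x / T + (\<Sum>i\<in>UNIV. v x * h i (x - unitv i) - v x * h i x) = v x * Lop T a u x"
      by (simp only:) (simp add: algebra_simps sum_distrib_left sum_subtractf)
  qed
  finally show ?thesis using P by simp
qed




lemma green_exists:
  fixes a :: "'d::finite cond"
  assumes T: "T > 0" and a: "\<And>y j. 0 \<le> a y j \<and> a y j \<le> B"
  shows "\<exists>G. bounded (range G) \<and> (\<forall>x. Lop T a G x = delta y x)"
proof -
  have db: "\<And>x. \<bar>delta y x\<bar> \<le> 1" by (simp add: delta_def)
  obtain G where "\<forall>x. \<bar>G x\<bar> \<le> T * 1" "\<forall>x. Lop T a G x = delta y x"
    using exist_sol[where a=a and B=B and f="delta y" and M=1, OF T a db] by blast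
  then show ?thesis by (auto simp: bounded_range_iff)
qed

lemma green_eq_of_sol:
  fixes a :: "'d::finite cond"
  assumes T: "T > 0" and a: "\<And>y j. 0 \<le> a y j \<and> a y j \<le> B"
    and Gb: "bounded (range G)" and L: "\<And>x. Lop T a G x = delta y x"
  shows "green_eq T a y G"
proof -
  have Gs: "G summable_on UNIV" by (rule green_summable[where a=a and B=B, OF T a Gb L])
  obtain K where K: "\<And>x. \<bar>G x\<bar> \<le> K" using Gb by (auto simp: bounded_range_iff)
  have "(\<lambda>x. G x * G x) summable_on UNIV" by (rule summ_bounded_mult[OF Gs K])
  then have G2: "(\<lambda>x. (G x)\<^sup>2) summable_on UNIV" by (simp add: power2_eq_square)
  have "(\<Sum>\<^sub>\<infinity>x. G x * v x / T) + (\<Sum>\<^sub>\<infinity>x. (\<Sum>i\<in>UNIV. grad v x i * a x i * grad G x i)) = v y"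
    if v2: "(\<lambda>x. (v x)\<^sup>2) summable_on UNIV" for v
  proof -
    have vb: "\<bar>v x\<bar> \<le> 1 + (\<Sum>\<^sub>\<infinity>x. (v x)\<^sup>2)" for x by (rule l2_bounded[OF v2])
    have "(\<Sum>\<^sub>\<infinity>x. G x * v x / T) + (\<Sum>\<^sub>\<infinity>x. (\<Sum>i\<in>UNIV. grad v x i * a x i * grad G x i))
        = (\<Sum>\<^sub>\<infinity>x. v x * Lop T a G x)"
      by (rule sbp[where a=a and B=B, OF a Gs vb])
    also have "\<dots> = (\<Sum>\<^sub>\<infinity>x. if x = y then v x else 0)"
      by (rule infsum_cong) (simp add: L delta_def)
    also have "\<dots> = v y" by (rule infsum_single)
    finally show ?thesis .
  qed
  then show ?thesis unfolding green_eq_def using G2 by blast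
qed

lemma delta_sq_summable: "(\<lambda>x. (delta p x)\<^sup>2) summable_on UNIV"
proof -
  have "(\<lambda>x. (delta p x)\<^sup>2) = (\<lambda>x. if x = p then 1 else 0)" by (auto simp: delta_def)
  then show ?thesis using summable_single[of p "\<lambda>_. 1::real"] by simp
qed

lemma green_eq_pointwise:
  fixes a :: "'d::finite cond"
  assumes ge: "green_eq T a y G"
  shows "bounded (range G) \<and> (\<forall>x. Lop T a G x = delta y x)"
proof -
  have G2: "(\<lambda>x. (G x)\<^sup>2) summable_on UNIV" using ge unfolding green_eq_def by blast
  have Gb: "bounded (range G)" unfolding bounded_range_iff using l2_bounded[OF G2] by blast
  have "Lop T a G x0 = delta y x0" for x0
  proof -
    define c where "c i x = a x i * grad G x i" for i x
    have eq: "(\<Sum>\<^sub>\<infinity>x. G x * delta x0 x / T) + (\<Sum>\<^sub>\<infinity>x. (\<Sum>i\<in>UNIV. grad (delta x0) x i * a x i * grad G x i)) = delta x0 y"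
      using ge delta_sq_summable[of x0] unfolding green_eq_def by blast
    have t1: "(\<Sum>\<^sub>\<infinity>x. G x * delta x0 x / T) = G x0 / T"
    proof -
      have "(\<Sum>\<^sub>\<infinity>x. G x * delta x0 x / T) = (\<Sum>\<^sub>\<infinity>x. if x = x0 then G x / T else 0)"
        by (rule infsum_cong) (simp add: delta_def)
      then show ?thesis by (simp add: infsum_single)
    qed
    have ig: "grad (delta x0) x i * a x i * grad G x i = (if x = x0 - unitv i then c i x else 0) - (if x = x0 then c i x else 0)" for x i
    proof -
      have "delta x0 (x + unitv i) = (if x = x0 - unitv i then 1 else 0)"
        by (auto simp: delta_def)
      then show ?thesis unfolding grad_def c_def by (auto simp: delta_def)
    qed
    have si: "(\<lambda>x. (if x = x0 - unitv i then c i x else 0) - (if x = x0 then c i x else 0)) summable_on UNIV" for i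
      by (rule summable_on_diff'[OF summable_single summable_single])
    have ii: "(\<Sum>\<^sub>\<infinity>x. (if x = x0 - unitv i then c i x else 0) - (if x = x0 then c i x else 0)) = c i (x0 - unitv i) - c i x0" for i
      by (simp add: infsum_diff'[OF summable_single summable_single] infsum_single)
    have "(\<Sum>\<^sub>\<infinity>x. (\<Sum>i\<in>UNIV. grad (delta x0) x i * a x i * grad G x i))
        = (\<Sum>\<^sub>\<infinity>x. (\<Sum>i\<in>UNIV. (if x = x0 - unitv i then c i x else 0) - (if x = x0 then c i x else 0)))"
      by (simp only: ig)
    also have "\<dots> = (\<Sum>i\<in>UNIV. (\<Sum>\<^sub>\<infinity>x. (if x = x0 - unitv i then c i x else 0) - (if x = x0 then c i x else 0)))"
      using infsum_sum_fin[of UNIV "\<lambda>i x. (if x = x0 - unitv i then c i x else 0) - (if x = x0 then c i x else 0)" UNIV] si by auto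
    also have "\<dots> = (\<Sum>i\<in>UNIV. c i (x0 - unitv i) - c i x0)" by (simp only: ii)
    finally have t2: "(\<Sum>\<^sub>\<infinity>x. (\<Sum>i\<in>UNIV. grad (delta x0) x i * a x i * grad G x i)) = (\<Sum>i\<in>UNIV. c i (x0 - unitv i) - c i x0)" .
    have "Lop T a G x0 = G x0 / T - (\<Sum>i\<in>UNIV. c i x0 - c i (x0 - unitv i))"
      unfolding Lop_def divstar_def c_def ..
    also have "\<dots> = G x0 / T + (\<Sum>i\<in>UNIV. c i (x0 - unitv i) - c i x0)"
      by (simp add: sum_subtractf)
    also have "\<dots> = delta x0 y" using eq t1 t2 by simp
    also have "\<dots> = delta y x0" by (simp add: delta_def eq_commute)
    finally show ?thesis .
  qed
  then show ?thesis using Gb by blast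
qed

lemma green_char:
  fixes a :: "'d::finite cond"
  assumes T: "T > 0" and a: "\<And>y j. 0 \<le> a y j \<and> a y j \<le> B"
    and Gb: "bounded (range G)" and L: "\<And>x. Lop T a G x = delta y x"
  shows "green T a x y = G x"
proof -
  have "(THE G. green_eq T a y G) = G"
  proof (rule the_equality)
    show "green_eq T a y G" by (rule green_eq_of_sol[where a=a and B=B, OF T a Gb L])
    fix G' assume "green_eq T a y G'"
    then have "bounded (range G')" "\<And>x. Lop T a G' x = delta y x" using green_eq_pointwise by blast+
    then show "G' = G" using uniq_bounded[where a=a and B=B, OF T a _ Gb] L by metis
  qed
  then show ?thesis unfolding green_def by simp
qed

lemma green_sym:
  fixes a :: "'d::finite cond"
  assumes T: "T > 0" and a: "\<And>y j. 0 \<le> a y j \<and> a y j \<le> B"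
  shows "green T a x w = green T a w x"
proof -
  obtain Gx where Gx: "bounded (range Gx)" "\<And>z. Lop T a Gx z = delta x z"
    using green_exists[where a=a and B=B, OF T a] by blast
  obtain Gw where Gw: "bounded (range Gw)" "\<And>z. Lop T a Gw z = delta w z"
    using green_exists[where a=a and B=B, OF T a] by blast
  have ex: "green_eq T a x Gx" by (rule green_eq_of_sol[where a=a and B=B, OF T a Gx])
  have ew: "green_eq T a w Gw" by (rule green_eq_of_sol[where a=a and B=B, OF T a Gw])
  have s2x: "(\<lambda>z. (Gx z)\<^sup>2) summable_on UNIV" using ex unfolding green_eq_def by blast
  have s2w: "(\<lambda>z. (Gw z)\<^sup>2) summable_on UNIV" using ew unfolding green_eq_def by blast
  have 1: "(\<Sum>\<^sub>\<infinity>z. Gx z * Gw z / T) + (\<Sum>\<^sub>\<infinity>z. (\<Sum>i\<in>UNIV. grad Gw z i * a z i * grad Gx z i)) = Gw x"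
    using ex s2w unfolding green_eq_def by blast
  have 2: "(\<Sum>\<^sub>\<infinity>z. Gw z * Gx z / T) + (\<Sum>\<^sub>\<infinity>z. (\<Sum>i\<in>UNIV. grad Gx z i * a z i * grad Gw z i)) = Gx w"
    using ew s2x unfolding green_eq_def by blast
  have "(\<Sum>\<^sub>\<infinity>z. Gx z * Gw z / T) = (\<Sum>\<^sub>\<infinity>z. Gw z * Gx z / T)" by (simp add: mult.commute)
  moreover have "(\<Sum>\<^sub>\<infinity>z. (\<Sum>i\<in>UNIV. grad Gw z i * a z i * grad Gx z i)) = (\<Sum>\<^sub>\<infinity>z. (\<Sum>i\<in>UNIV. grad Gx z i * a z i * grad Gw z i))"
    by (simp add: mult.commute mult.left_commute)
  ultimately have "Gw x = Gx w" using 1 2 by simp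
  moreover have "green T a x w = Gw x" by (rule green_char[where a=a and B=B, OF T a Gw])
  moreover have "green T a w x = Gx w" by (rule green_char[where a=a and B=B, OF T a Gx])
  ultimately show ?thesis by simp
qed

lemma corr_eq_iff:
  "corr_eq T c \<xi> \<phi> \<longleftrightarrow> bounded (range \<phi>) \<and> (\<forall>x. Lop T c \<phi> x = divstar (\<lambda>y j. c y j * \<xi> $ j) x)"
proof -
  have "\<phi> x / T - divstar (\<lambda>y i. c y i * (grad \<phi> y i + \<xi> $ i)) x = Lop T c \<phi> x - divstar (\<lambda>y j. c y j * \<xi> $ j) x" for x
    unfolding Lop_def divstar_def by (simp add: algebra_simps sum.distrib sum_subtractf)
  then show ?thesis unfolding corr_eq_def by simp
qed

lemma corr_props:
  fixes c :: "'d::finite cond"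
  assumes T: "T > 0" and c: "\<And>y j. 0 \<le> c y j \<and> c y j \<le> B" and xi: "\<And>j. \<bar>\<xi> $ j\<bar> \<le> 1"
  shows "bounded (range (corrector T c \<xi>)) \<and> (\<forall>x. Lop T c (corrector T c \<xi>) x = divstar (\<lambda>y j. c y j * \<xi> $ j) x)"
proof -
  have fb: "\<bar>divstar (\<lambda>y j. c y j * \<xi> $ j) x\<bar> \<le> (\<Sum>j\<in>(UNIV::'d set). 2 * B)" for x
  proof -
    have "\<bar>divstar (\<lambda>y j. c y j * \<xi> $ j) x\<bar> \<le> (\<Sum>j\<in>UNIV. \<bar>c x j * \<xi> $ j - c (x - unitv j) j * \<xi> $ j\<bar>)"
      unfolding divstar_def by (rule sum_abs)
    also have "\<dots> \<le> (\<Sum>j\<in>(UNIV::'d set). 2 * B)"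
    proof (rule sum_mono)
      fix j
      have "\<bar>c x j * \<xi> $ j\<bar> \<le> B" unfolding abs_mult using c[of x j] xi[of j]
        by (metis abs_ge_zero abs_of_nonneg mult_le_one mult.commute mult_right_le_one_le order_trans mult_left_le)
      moreover have "\<bar>c (x - unitv j) j * \<xi> $ j\<bar> \<le> B" unfolding abs_mult using c[of "x - unitv j" j] xi[of j]
        by (metis abs_ge_zero abs_of_nonneg mult_le_one mult.commute mult_right_le_one_le order_trans mult_left_le)
      ultimately show "\<bar>c x j * \<xi> $ j - c (x - unitv j) j * \<xi> $ j\<bar> \<le> 2 * B" by linarith
    qed
    finally show ?thesis .
  qed
  obtain \<phi> where \<phi>: "\<forall>x. \<bar>\<phi> x\<bar> \<le> T * (\<Sum>j\<in>(UNIV::'d set). 2 * B)" "\<forall>x. Lop T c \<phi> x = divstar (\<lambda>y j. c y j * \<xi> $ j) x"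
    using exist_sol[where a=c and B=B and f="divstar (\<lambda>y j. c y j * \<xi> $ j)", OF T c fb] by blast
  have \<phi>b: "bounded (range \<phi>)" using \<phi>(1) by (auto simp: bounded_range_iff)
  have "corr_eq T c \<xi> \<phi>" unfolding corr_eq_iff using \<phi>b \<phi>(2) by blast
  moreover have "\<psi> = \<phi>" if "corr_eq T c \<xi> \<psi>" for \<psi>
  proof -
    have "bounded (range \<psi>)" "\<And>x. Lop T c \<psi> x = divstar (\<lambda>y j. c y j * \<xi> $ j) x"
      using that unfolding corr_eq_iff by blast+
    then show ?thesis using uniq_bounded[where a=c and B=B, OF T c _ \<phi>b] \<phi>(2) by metis
  qed
  ultimately have "corrector T c \<xi> = \<phi>" unfolding corrector_def by (rule the_equality)
  then show ?thesis using \<phi>b \<phi>(2) by simp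
qed




lemma cond_upd_apply: "cond_upd a z i s y j = (if y = z \<and> j = i then s else a y j)"
  by (simp add: cond_upd_def)

lemma sum_if_eq: "(\<Sum>j\<in>(UNIV::'d::finite set). if P \<and> j = i then K else 0) = (if P then K else (0::real))"
proof -
  have "(\<lambda>j. if P \<and> j = i then K else 0) = (\<lambda>j. if j = i then (if P then K else 0) else 0)" by auto
  then show ?thesis by (simp add: sum.delta)
qed

lemma divstar_upd:
  fixes a :: "'d::finite cond"
  shows "divstar (\<lambda>y j. cond_upd a z i s y j * g y j) x
       = divstar (\<lambda>y j. a y j * g y j) x + (s - a z i) * g z i * (delta z x - delta (z + unitv i) x)"
proof -
  define K where "K = (s - a z i) * g z i"
  have e: "(\<lambda>y j. cond_upd a z i s y j * g y j) = (\<lambda>y j. a y j * g y j + (if y = z \<and> j = i then K else 0))"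
    by (auto simp: cond_upd_apply fun_eq_iff algebra_simps K_def)
  have "divstar (\<lambda>y j. cond_upd a z i s y j * g y j) x
     = (\<Sum>j\<in>UNIV. a x j * g x j - a (x - unitv j) j * g (x - unitv j) j)
       + ((\<Sum>j\<in>UNIV. if x = z \<and> j = i then K else 0) - (\<Sum>j\<in>UNIV. if x - unitv j = z \<and> j = i then K else 0))"
    unfolding e divstar_def by (simp only: sum.distrib sum_subtractf)
  also have "\<dots> = divstar (\<lambda>y j. a y j * g y j) x + (s - a z i) * g z i * (delta z x - delta (z + unitv i) x)"
  proof -
    have "(\<Sum>j\<in>UNIV. if x - unitv j = z \<and> j = i then K else 0) = (\<Sum>j\<in>(UNIV::'d set). if j = i then (if x = z + unitv i then K else 0) else 0)"
      by (rule sum.cong) auto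
    also have "\<dots> = (if x = z + unitv i then K else 0)" by (simp add: sum.delta)
    finally have h: "(\<Sum>j\<in>UNIV. if x - unitv j = z \<and> j = i then K else 0) = (if x = z + unitv i then K else 0)" .
    show ?thesis unfolding h sum_if_eq unfolding divstar_def delta_def K_def by (auto simp: algebra_simps)
  qed
  finally show ?thesis .
qed

lemma Lop_upd:
  fixes a :: "'d::finite cond"
  shows "Lop T (cond_upd a z i s) u x = Lop T a u x - (s - a z i) * grad u z i * (delta z x - delta (z + unitv i) x)"
  unfolding Lop_def using divstar_upd[of a z i s "grad u" x] by simp

lemma nonneg_le_infsum:
  fixes f :: "'a \<Rightarrow> real"
  assumes "f summable_on UNIV" "\<And>x. f x \<ge> 0"
  shows "f p \<le> infsum f UNIV"
proof -
  have "(\<Sum>\<^sub>\<infinity>x\<in>{p}. f x) \<le> infsum f UNIV"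
    by (rule infsum_mono_neutral) (use assms in auto)
  then show ?thesis by simp
qed

lemma key:
  fixes a :: "'d::finite cond" and z :: "'d site" and i :: 'd and \<xi> :: "real ^ 'd"
  assumes T: "T > 0" and aa: "\<And>y j. \<alpha> \<le> a y j \<and> a y j \<le> \<beta>" and al: "\<alpha> > 0"
    and xi: "\<And>j. \<bar>\<xi> $ j\<bar> \<le> 1"
  defines "\<phi> \<equiv> corrector T a \<xi>"
    and "F \<equiv> \<lambda>x. grad (\<lambda>w. green T a w x) z i"
    and "D \<equiv> grad (\<lambda>x. grad (\<lambda>w. green T a w x) z i) z i"
    and "ca \<equiv> grad (corrector T a \<xi>) z i + \<xi> $ i"
  shows "0 \<le> D" "a z i * D \<le> 1"
    "\<And>s. s > 0 \<Longrightarrow> 1 + (s - a z i) * D > 0"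
    "\<And>s x. s > 0 \<Longrightarrow> corrector T (cond_upd a z i s) \<xi> x = \<phi> x - (s - a z i) * (ca / (1 + (s - a z i) * D)) * F x"
    "\<And>s. s > 0 \<Longrightarrow> grad (corrector T (cond_upd a z i s) \<xi>) z i + \<xi> $ i = ca / (1 + (s - a z i) * D)"
proof -
  have D_F: "D = grad F z i" unfolding D_def F_def ..
  have ca_p: "ca = grad \<phi> z i + \<xi> $ i" unfolding ca_def \<phi>_def ..
  have a: "\<And>y j. 0 \<le> a y j \<and> a y j \<le> \<beta>" using aa al by (meson less_le_trans less_imp_le)
  define e where "e = unitv i"
  obtain G0 where G0: "bounded (range G0)" "\<And>x. Lop T a G0 x = delta z x"
    using green_exists[where a=a and B=\<beta>, OF T a] by blast
  obtain G1 where G1: "bounded (range G1)" "\<And>x. Lop T a G1 x = delta (z + e) x"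
    using green_exists[where a=a and B=\<beta>, OF T a] by blast
  have Fe: "F x = G1 x - G0 x" for x
  proof -
    have "F x = green T a (z + e) x - green T a z x" unfolding F_def grad_def e_def ..
    also have "\<dots> = green T a x (z + e) - green T a x z"
      using green_sym[where a=a and B=\<beta>, OF T a] by metis
    also have "\<dots> = G1 x - G0 x"
      using green_char[where a=a and B=\<beta>, OF T a G0] green_char[where a=a and B=\<beta>, OF T a G1] by metis
    finally show ?thesis .
  qed
  have Fe': "F = (\<lambda>x. G1 x - G0 x)" using Fe by auto
  obtain K0 where K0: "\<And>x. \<bar>G0 x\<bar> \<le> K0" using G0(1) by (auto simp: bounded_range_iff)
  obtain K1 where K1: "\<And>x. \<bar>G1 x\<bar> \<le> K1" using G1(1) by (auto simp: bounded_range_iff)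
  have Fbd: "\<bar>F x\<bar> \<le> K1 + K0" for x unfolding Fe using abs_triangle_ineq4[of "G1 x" "G0 x"] K0[of x] K1[of x] by linarith
  have Fb: "bounded (range F)" using Fbd by (auto simp: bounded_range_iff)
  have Fs: "F summable_on UNIV" unfolding Fe'
    by (rule summable_on_diff'[OF green_summable[where a=a and B=\<beta>, OF T a G1] green_summable[where a=a and B=\<beta>, OF T a G0]])
  have LF: "Lop T a F x = delta (z + e) x - delta z x" for x
    unfolding Fe' Lop_diff G0(2) G1(2) ..
  define Q where "Q = (\<Sum>\<^sub>\<infinity>x. (\<Sum>j\<in>UNIV. grad F x j * a x j * grad F x j))"
  define P where "P = (\<Sum>\<^sub>\<infinity>x. F x * F x / T)"
  have "P + Q = (\<Sum>\<^sub>\<infinity>x. F x * Lop T a F x)"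
    unfolding P_def Q_def by (rule sbp[where a=a and B=\<beta>, OF a Fs Fbd])
  also have "\<dots> = (\<Sum>\<^sub>\<infinity>x. (if x = z + e then F x else 0) - (if x = z then F x else 0))"
    by (rule infsum_cong) (simp add: LF delta_def algebra_simps)
  also have "\<dots> = F (z + e) - F z"
    by (simp add: infsum_diff'[OF summable_single summable_single] infsum_single)
  also have "\<dots> = D" unfolding D_F grad_def e_def ..
  finally have PQ: "P + Q = D" .
  have P0: "P \<ge> 0" unfolding P_def by (rule infsum_nonneg) (use T in simp)
  have gFb: "\<bar>grad F x j\<bar> \<le> 2 * (K1 + K0)" for x j
    unfolding grad_def mult_2 by (rule order_trans[OF abs_triangle_ineq4 add_mono[OF Fbd Fbd]])
  have ab: "\<bar>a x j\<bar> \<le> \<beta>" for x j using a[of x j] by simp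
  have gFs: "(\<lambda>x. grad F x j) summable_on UNIV" for j
    unfolding grad_def by (rule summable_on_diff'[OF summable_shift[OF Fs] Fs])
  have qs: "(\<lambda>x. grad F x j * a x j * grad F x j) summable_on UNIV" for j
  proof -
    have "(\<lambda>x. a x j * grad F x j) summable_on UNIV" by (rule summ_bounded_mult[OF gFs ab])
    then have "(\<lambda>x. grad F x j * (a x j * grad F x j)) summable_on UNIV" by (rule summ_bounded_mult[OF _ gFb])
    then show ?thesis by (simp add: mult.assoc)
  qed
  have Qs: "(\<lambda>x. \<Sum>j\<in>UNIV. grad F x j * a x j * grad F x j) summable_on UNIV"
    using infsum_sum_fin[of UNIV "\<lambda>j x. grad F x j * a x j * grad F x j" UNIV] qs by auto
  have qn: "0 \<le> grad F x j * a x j * grad F x j" for x j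
  proof -
    have eq: "grad F x j * a x j * grad F x j = a x j * (grad F x j)\<^sup>2" by (simp add: power2_eq_square algebra_simps)
    show ?thesis unfolding eq using a[of x j] by simp
  qed
  have "a z i * D\<^sup>2 = grad F z i * a z i * grad F z i" unfolding D_F by (simp add: power2_eq_square)
  also have "\<dots> \<le> (\<Sum>j\<in>UNIV. grad F z j * a z j * grad F z j)"
    by (rule member_le_sum) (use qn in auto)
  also have "\<dots> \<le> Q" unfolding Q_def
    by (rule nonneg_le_infsum[OF Qs, of z]) (simp add: qn sum_nonneg)
  finally have QD: "a z i * D\<^sup>2 \<le> Q" .
  have aepos: "a z i > 0" using aa[of z i] al by linarith
  have Q0: "Q \<ge> 0" using QD aepos by (meson order_trans zero_le_power2 mult_nonneg_nonneg less_imp_le)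
  show D0: "0 \<le> D" using PQ P0 Q0 by linarith
  have aDD: "a z i * D * D \<le> D" using PQ P0 QD by (simp add: power2_eq_square)
  show aD1: "a z i * D \<le> 1"
  proof (cases "D = 0")
    case True then show ?thesis by simp
  next
    case False
    then have "D > 0" using D0 by simp
    then show ?thesis using aDD by (metis mult_le_cancel_right2) 
  qed
  show qpos: "1 + (s - a z i) * D > 0" if "s > 0" for s
  proof (cases "D = 0")
    case True then show ?thesis by simp
  next
    case False
    then have "D > 0" using D0 by simp
    then have "s * D > 0" using that by simp
    moreover have "1 + (s - a z i) * D = (1 - a z i * D) + s * D" by (simp add: algebra_simps)
    ultimately show ?thesis using aD1 by linarith
  qed
  have pert: "corrector T (cond_upd a z i s) \<xi> x = \<phi> x - (s - a z i) * (grad (corrector T (cond_upd a z i s) \<xi>) z i + \<xi> $ i) * F x"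
    if s: "s > 0" for s x
  proof -
    define as where "as = cond_upd a z i s"
    define \<phi>s where "\<phi>s = corrector T as \<xi>"
    define cs where "cs = grad \<phi>s z i + \<xi> $ i"
    have asb: "0 \<le> as y j \<and> as y j \<le> max \<beta> s" for y j
      unfolding as_def cond_upd_apply using a[of y j] s by auto
    have ps: "bounded (range \<phi>s)" "\<And>x. Lop T as \<phi>s x = divstar (\<lambda>y j. as y j * \<xi> $ j) x"
      using corr_props[where c=as and B="max \<beta> s", OF T asb xi] unfolding \<phi>s_def by blast+
    have p: "bounded (range \<phi>)" "\<And>x. Lop T a \<phi> x = divstar (\<lambda>y j. a y j * \<xi> $ j) x"
      using corr_props[where c=a and B=\<beta>, OF T a xi] unfolding \<phi>_def by blast+
    define w where "w x = (\<phi>s x - \<phi> x) + ((s - a z i) * cs) * F x" for x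
    have Lw: "Lop T a w x = 0" for x
    proof -
      have "Lop T a w x = Lop T a (\<lambda>x. \<phi>s x - \<phi> x) x + ((s - a z i) * cs) * Lop T a F x"
        unfolding w_def using Lop_lin[of T a 1 "\<lambda>x. \<phi>s x - \<phi> x" "(s - a z i) * cs" F x] by simp
      also have "\<dots> = Lop T a \<phi>s x - Lop T a \<phi> x + ((s - a z i) * cs) * Lop T a F x"
        by (simp add: Lop_diff)
      also have "Lop T a \<phi>s x = Lop T as \<phi>s x + (s - a z i) * grad \<phi>s z i * (delta z x - delta (z + unitv i) x)"
        unfolding as_def Lop_upd by simp
      also have "Lop T as \<phi>s x = divstar (\<lambda>y j. a y j * \<xi> $ j) x + (s - a z i) * \<xi> $ i * (delta z x - delta (z + unitv i) x)"
        unfolding ps(2) unfolding as_def by (rule divstar_upd)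
      finally show ?thesis unfolding p(2) LF cs_def e_def by (simp add: algebra_simps)
    qed
    have wb: "bounded (range w)"
    proof -
      obtain Ks where Ks: "\<And>x. \<bar>\<phi>s x\<bar> \<le> Ks" using ps(1) by (auto simp: bounded_range_iff)
      obtain Kp where Kp: "\<And>x. \<bar>\<phi> x\<bar> \<le> Kp" using p(1) by (auto simp: bounded_range_iff)
      have "\<bar>w x\<bar> \<le> Ks + Kp + \<bar>(s - a z i) * cs\<bar> * (K1 + K0)" for x
      proof -
        have "\<bar>((s - a z i) * cs) * F x\<bar> \<le> \<bar>(s - a z i) * cs\<bar> * (K1 + K0)"
          unfolding abs_mult[of _ "F x"] by (rule mult_left_mono[OF Fbd]) simp
        then show ?thesis unfolding w_def using Ks[of x] Kp[of x] by linarith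
      qed
      then show ?thesis by (auto simp: bounded_range_iff)
    qed
    have zb: "bounded (range (\<lambda>x::'d site. 0::real))" by (auto simp: bounded_range_iff)
    have L0: "Lop T a (\<lambda>_. 0) x = 0" for x by (simp add: Lop_expand)
    have "w = (\<lambda>_. 0)"
      by (rule uniq_bounded[where a=a and B=\<beta>, OF T a wb zb]) (simp only: Lw L0)
    then have "w x = 0" by simp
    then have "\<phi>s x = \<phi> x - (s - a z i) * cs * F x" unfolding w_def by (simp add: algebra_simps)
    then show ?thesis by (simp only: \<phi>s_def cs_def as_def)
  qed
  show cs: "grad (corrector T (cond_upd a z i s) \<xi>) z i + \<xi> $ i = ca / (1 + (s - a z i) * D)" if s: "s > 0" for s
  proof -
    define Cs where "Cs = corrector T (cond_upd a z i s) \<xi>"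
    define cs where "cs = grad Cs z i + \<xi> $ i"
    have p1: "Cs (z + unitv i) = \<phi> (z + unitv i) - (s - a z i) * cs * F (z + unitv i)"
      using pert[OF s, of "z + unitv i"] unfolding Cs_def[symmetric] cs_def[symmetric] .
    have p0: "Cs z = \<phi> z - (s - a z i) * cs * F z"
      using pert[OF s, of z] unfolding Cs_def[symmetric] cs_def[symmetric] .
    have "grad Cs z i = grad \<phi> z i - (s - a z i) * cs * D"
      unfolding D_F grad_def p1 p0 by (simp add: algebra_simps)
    then have "cs = ca - (s - a z i) * cs * D" unfolding cs_def ca_p by simp
    then have "cs * (1 + (s - a z i) * D) = ca" by (simp add: algebra_simps)
    then have "cs = ca / (1 + (s - a z i) * D)" using qpos[OF s] by (simp add: field_simps)
    then show ?thesis unfolding cs_def Cs_def .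
  qed
  show "corrector T (cond_upd a z i s) \<xi> x = \<phi> x - (s - a z i) * (ca / (1 + (s - a z i) * D)) * F x" if s: "s > 0" for s x
    using pert[OF s, of x] unfolding cs[OF s] .
qed




lemma q_lower:
  fixes \<alpha> \<beta> ae t D :: real
  assumes al: "0 < \<alpha>" and ae: "\<alpha> \<le> ae" "ae \<le> \<beta>" and t: "\<alpha> \<le> t" "t \<le> \<beta>" and D0: "0 \<le> D" and aD: "ae * D \<le> 1"
  shows "\<alpha> / \<beta> \<le> 1 + (t - ae) * D"
proof (cases "t \<ge> ae")
  case True
  have "\<alpha> / \<beta> \<le> 1" using al ae by simp
  moreover have "0 \<le> (t - ae) * D" using True D0 by simp
  ultimately show ?thesis by linarith
next
  case False
  have aep: "ae > 0" using al ae by linarith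
  have "(ae - t) * (ae * D) \<le> (ae - t) * 1" using False aD by (intro mult_left_mono) auto
  then have "(ae - t) * D \<le> (ae - t) / ae" using aep by (simp add: field_simps)
  moreover have "1 - (ae - t) / ae = t / ae" using aep by (simp add: field_simps)
  moreover have "\<alpha> / \<beta> \<le> t / ae"
  proof -
    have "\<alpha> / \<beta> \<le> \<alpha> / ae" using al aep ae by (intro divide_left_mono) auto
    also have "\<dots> \<le> t / ae" using t aep by (intro divide_right_mono) auto
    finally show ?thesis .
  qed
  moreover have "1 + (t - ae) * D = 1 - (ae - t) * D" by (simp add: algebra_simps)
  ultimately show ?thesis by linarith
qed

lemma pow_sum_le:
  fixes x y :: real
  assumes "0 \<le> x" "0 \<le> y"
  shows "(x + y) ^ n \<le> 2 ^ n * (x ^ n + y ^ n)"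
proof -
  have "(x + y) ^ n \<le> (2 * max x y) ^ n" using assms by (intro power_mono) auto
  also have "\<dots> = 2 ^ n * (max x y) ^ n" by (simp add: power_mult_distrib)
  also have "(max x y) ^ n \<le> x ^ n + y ^ n"
    using assms by (cases "x \<le> y") (auto simp: max_def)
  then have "2 ^ n * (max x y) ^ n \<le> 2 ^ n * (x ^ n + y ^ n)" by simp
  finally show ?thesis .
qed

lemma final_est:
  fixes P Pd A K g H r :: real
  assumes P: "\<bar>P\<bar> \<le> A + K * g * H" and Pd: "\<bar>Pd\<bar> \<le> g * H / r\<^sup>2"
    and A: "A \<ge> 0" and K: "K \<ge> 0" and g: "g \<ge> 0" and H: "H \<ge> 0" and r: "r > 0"
  shows "\<bar>(1 + real n) * (Pd * P ^ n)\<bar> \<le> ((real n + 1) * 2 ^ n * (1 + K ^ n) / r\<^sup>2) * (A ^ n * g * H + g ^ (n + 1) * H ^ (n + 1))"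
proof -
  have KgH: "K * g * H \<ge> 0" using K g H by simp
  have "\<bar>P\<bar> ^ n \<le> (A + K * g * H) ^ n" using P by (intro power_mono) auto
  also have "\<dots> \<le> 2 ^ n * (A ^ n + (K * g * H) ^ n)" by (rule pow_sum_le[OF A KgH])
  finally have Pn: "\<bar>P\<bar> ^ n \<le> 2 ^ n * (A ^ n + (K * g * H) ^ n)" .
  have "\<bar>(1 + real n) * (Pd * P ^ n)\<bar> = (1 + real n) * (\<bar>Pd\<bar> * \<bar>P\<bar> ^ n)"
    by (simp add: abs_mult power_abs)
  also have "\<dots> \<le> (1 + real n) * ((g * H / r\<^sup>2) * (2 ^ n * (A ^ n + (K * g * H) ^ n)))"
    using Pd Pn by (intro mult_left_mono mult_mono) auto
  also have "\<dots> = ((real n + 1) * 2 ^ n / r\<^sup>2) * (A ^ n * g * H + K ^ n * (g ^ (n + 1) * H ^ (n + 1)))"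
    by (simp add: field_simps power_mult_distrib)
  also have "\<dots> \<le> ((real n + 1) * 2 ^ n / r\<^sup>2) * ((1 + K ^ n) * (A ^ n * g * H + g ^ (n + 1) * H ^ (n + 1)))"
  proof (rule mult_left_mono)
    have t1: "A ^ n * g * H \<ge> 0" using A g H by simp
    have t2: "g ^ (n + 1) * H ^ (n + 1) \<ge> 0" using g H by simp
    have Kn: "K ^ n \<ge> 0" using K by simp
    have "A ^ n * g * H + K ^ n * (g ^ (n + 1) * H ^ (n + 1))
       \<le> (1 + K ^ n) * (A ^ n * g * H) + (1 + K ^ n) * (g ^ (n + 1) * H ^ (n + 1))"
    proof (rule add_mono)
      have "0 \<le> K ^ n * (A ^ n * g * H)" using t1 Kn by simp
      then show "A ^ n * g * H \<le> (1 + K ^ n) * (A ^ n * g * H)" by (simp add: distrib_right)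
      show "K ^ n * (g ^ (n + 1) * H ^ (n + 1)) \<le> (1 + K ^ n) * (g ^ (n + 1) * H ^ (n + 1))"
        using t2 by (simp add: distrib_right)
    qed
    then show "A ^ n * g * H + K ^ n * (g ^ (n + 1) * H ^ (n + 1)) \<le> (1 + K ^ n) * (A ^ n * g * H + g ^ (n + 1) * H ^ (n + 1))"
      by (simp add: algebra_simps)
    show "0 \<le> (real n + 1) * 2 ^ n / r\<^sup>2" by simp
  qed
  also have "\<dots> = ((real n + 1) * 2 ^ n * (1 + K ^ n) / r\<^sup>2) * (A ^ n * g * H + g ^ (n + 1) * H ^ (n + 1))"
    by (simp add: field_simps)
  finally show ?thesis .
qed

lemma deriv_p:
  fixes c0 ae D cF :: real
  assumes q: "1 + (t - ae) * D \<noteq> 0"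
  shows "((\<lambda>s. c0 - (s - ae) * (ca / (1 + (s - ae) * D)) * Fx) has_real_derivative (- ca * Fx / (1 + (t - ae) * D)\<^sup>2)) (at t)"
proof -
  have fe: "(\<lambda>s. c0 - (s - ae) * (ca / (1 + (s - ae) * D)) * Fx) = (\<lambda>s. c0 - (ca * Fx) * ((s - ae) / (1 + (s - ae) * D)))"
    by (simp add: fun_eq_iff field_simps)
  have d1: "((\<lambda>s. s - ae) has_real_derivative 1) (at t)" by (auto intro!: derivative_eq_intros)
  have d2: "((\<lambda>s. 1 + (s - ae) * D) has_real_derivative D) (at t)" by (auto intro!: derivative_eq_intros)
  have d3: "((\<lambda>s. (s - ae) / (1 + (s - ae) * D)) has_real_derivative
      ((1 * (1 + (t - ae) * D) - (t - ae) * D) / ((1 + (t - ae) * D) * (1 + (t - ae) * D)))) (at t)"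
    by (rule DERIV_divide[OF d1 d2 q])
  have d4: "((\<lambda>s. c0 - (ca * Fx) * ((s - ae) / (1 + (s - ae) * D))) has_real_derivative
      (0 - (ca * Fx) * ((1 * (1 + (t - ae) * D) - (t - ae) * D) / ((1 + (t - ae) * D) * (1 + (t - ae) * D))))) (at t)"
    by (rule DERIV_diff[OF DERIV_const DERIV_cmult[OF d3]])
  have e: "0 - (ca * Fx) * ((1 * (1 + (t - ae) * D) - (t - ae) * D) / ((1 + (t - ae) * D) * (1 + (t - ae) * D)))
      = - ca * Fx / (1 + (t - ae) * D)\<^sup>2"
    by (simp add: power2_eq_square)
  show ?thesis using d4 unfolding fe e .
qed

lemma common_facts:
  fixes a :: "'d::finite cond" and \<xi> :: "real ^ 'd" and z :: "'d site" and i :: 'd and x :: "'d site" and T t :: real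
  assumes al: "0 < \<alpha>" and h: "conductivity \<alpha> \<beta> a" "T > 0" "norm \<xi> = 1" and t: "t \<in> {\<alpha>..\<beta>}"
  defines "D \<equiv> grad (\<lambda>x. grad (\<lambda>w. green T a w x) z i) z i"
    and "ca \<equiv> grad (corrector T a \<xi>) z i + \<xi> $ i"
  shows "\<alpha> / \<beta> \<le> 1 + (t - a z i) * D" "\<bar>ca\<bar> \<le> \<bar>grad (corrector T a \<xi>) z i\<bar> + 1"
    "\<bar>t - a z i\<bar> \<le> \<beta> - \<alpha>" "t > 0"
    "\<And>s. s > 0 \<Longrightarrow> corrector T (cond_upd a z i s) \<xi> x = corrector T a \<xi> x - (s - a z i) * (ca / (1 + (s - a z i) * D)) * grad (\<lambda>w. green T a w x) z i"
    "grad (corrector T (cond_upd a z i t) \<xi>) z i + \<xi> $ i = ca / (1 + (t - a z i) * D)"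
proof -
  have xi: "\<And>j. \<bar>\<xi> $ j\<bar> \<le> 1" using component_le_norm_cart[of \<xi>] h(3) by simp
  have aa: "\<And>y j. \<alpha> \<le> a y j \<and> a y j \<le> \<beta>" using h(1) unfolding conductivity_def by blast
  note K = key[where a=a and z=z and i=i and \<xi>=\<xi> and \<alpha>=\<alpha> and \<beta>=\<beta> and T=T, OF h(2) aa al xi]
  show tpos: "t > 0" using t al by simp
  show "\<alpha> / \<beta> \<le> 1 + (t - a z i) * D" unfolding D_def
    by (rule q_lower[OF al _ _ _ _ K(1) K(2)]) (use aa[of z i] t in auto)
  show "\<bar>ca\<bar> \<le> \<bar>grad (corrector T a \<xi>) z i\<bar> + 1" unfolding ca_def
    using xi[of i] abs_triangle_ineq[of "grad (corrector T a \<xi>) z i" "\<xi> $ i"] by linarith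
  show "\<bar>t - a z i\<bar> \<le> \<beta> - \<alpha>" using aa[of z i] t by auto
  show "\<And>s. s > 0 \<Longrightarrow> corrector T (cond_upd a z i s) \<xi> x = corrector T a \<xi> x - (s - a z i) * (ca / (1 + (s - a z i) * D)) * grad (\<lambda>w. green T a w x) z i"
    using K(4) unfolding ca_def D_def by blast
  show "grad (corrector T (cond_upd a z i t) \<xi>) z i + \<xi> $ i = ca / (1 + (t - a z i) * D)"
    using K(5)[OF tpos] unfolding ca_def D_def .
qed

theorem lemma2p4:
  fixes \<alpha> \<beta> :: real
  assumes "0 < \<alpha>" and "\<alpha> \<le> \<beta>" and "CARD('d::finite) \<ge> 2"
  shows
   "(\<forall>(a::'d cond) T (\<xi>::real ^ 'd) z i x.
       conductivity \<alpha> \<beta> a \<and> T > 0 \<and> norm \<xi> = 1 \<longrightarrow>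
       ((\<lambda>t. corrector T (cond_upd a z i t) \<xi> x) has_real_derivative
          (- (grad (corrector T a \<xi>) z i + \<xi> $ i) * grad (\<lambda>w. green T a w x) z i)) (at (a z i)))
    \<and> (\<forall>n::nat. \<exists>C>0. \<forall>(a::'d cond) T (\<xi>::real ^ 'd) z i x.
       conductivity \<alpha> \<beta> a \<and> T > 0 \<and> norm \<xi> = 1 \<longrightarrow>
       (\<forall>t\<in>{\<alpha>..\<beta>}.
          \<bar>deriv (\<lambda>s. (corrector T (cond_upd a z i s) \<xi> x) ^ (n + 1)) t\<bar>
          \<le> C * (\<bar>corrector T a \<xi> x\<bar> ^ n * (\<bar>grad (corrector T a \<xi>) z i\<bar> + 1)
                   * \<bar>grad (\<lambda>w. green T a w x) z i\<bar>
                 + (\<bar>grad (corrector T a \<xi>) z i\<bar> + 1) ^ (n + 1)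
                   * \<bar>grad (\<lambda>w. green T a w x) z i\<bar> ^ (n + 1))))
    \<and> (\<exists>C>0. \<forall>(a::'d cond) T (\<xi>::real ^ 'd) z i.
       conductivity \<alpha> \<beta> a \<and> T > 0 \<and> norm \<xi> = 1 \<longrightarrow>
       (\<forall>t\<in>{\<alpha>..\<beta>}.
          \<bar>grad (corrector T (cond_upd a z i t) \<xi>) z i\<bar>
          \<le> C * (\<bar>grad (corrector T a \<xi>) z i\<bar> + 1)))"
proof -
  have xib: "\<bar>\<xi> $ j\<bar> \<le> 1" if "norm \<xi> = 1" for \<xi> :: "real ^ 'd" and j
    using component_le_norm_cart[of \<xi> j] that by simp
  have condb: "\<alpha> \<le> a y j \<and> a y j \<le> \<beta>" if "conductivity \<alpha> \<beta> a" for a :: "'d cond" and y j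
    using that unfolding conductivity_def by blast
  have P1: "\<forall>(a::'d cond) T (\<xi>::real ^ 'd) z i x.
       conductivity \<alpha> \<beta> a \<and> T > 0 \<and> norm \<xi> = 1 \<longrightarrow>
       ((\<lambda>t. corrector T (cond_upd a z i t) \<xi> x) has_real_derivative
          (- (grad (corrector T a \<xi>) z i + \<xi> $ i) * grad (\<lambda>w. green T a w x) z i)) (at (a z i))"
  proof (intro allI impI)
    fix a :: "'d cond" and T :: real and \<xi> :: "real ^ 'd" and z :: "'d site" and i :: 'd and x :: "'d site"
    assume h: "conductivity \<alpha> \<beta> a \<and> T > 0 \<and> norm \<xi> = 1"
    then have T: "T > 0" and aa: "\<And>y j. \<alpha> \<le> a y j \<and> a y j \<le> \<beta>" and xi: "\<And>j. \<bar>\<xi> $ j\<bar> \<le> 1"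
      using xib condb by auto
    note K = key[where a=a and z=z and i=i and \<xi>=\<xi> and \<alpha>=\<alpha> and \<beta>=\<beta>, OF T aa assms(1) xi]
    define D where "D = grad (\<lambda>x. grad (\<lambda>w. green T a w x) z i) z i"
    define ca where "ca = grad (corrector T a \<xi>) z i + \<xi> $ i"
    define Fx where "Fx = grad (\<lambda>w. green T a w x) z i"
    have aep: "a z i > 0" using aa[of z i] assms(1) by linarith
    have d: "((\<lambda>s. corrector T a \<xi> x - (s - a z i) * (ca / (1 + (s - a z i) * D)) * Fx) has_real_derivative (- ca * Fx / (1 + (a z i - a z i) * D)\<^sup>2)) (at (a z i))"
      by (rule deriv_p) simp
    then have d': "((\<lambda>s. corrector T a \<xi> x - (s - a z i) * (ca / (1 + (s - a z i) * D)) * Fx) has_real_derivative (- ca * Fx)) (at (a z i))"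
      by simp
    show "((\<lambda>t. corrector T (cond_upd a z i t) \<xi> x) has_real_derivative
          (- (grad (corrector T a \<xi>) z i + \<xi> $ i) * grad (\<lambda>w. green T a w x) z i)) (at (a z i))"
    proof (rule has_field_derivative_transform_within_open[OF d'[unfolded ca_def Fx_def]])
      show "open {0::real<..}" by simp
      show "a z i \<in> {0<..}" using aep by simp
      fix s :: real assume "s \<in> {0<..}"
      then have "s > 0" by simp
      from K(4)[OF this, of x] show "corrector T a \<xi> x - (s - a z i) * ((grad (corrector T a \<xi>) z i + \<xi> $ i) / (1 + (s - a z i) * D)) * grad (\<lambda>w. green T a w x) z i
          = corrector T (cond_upd a z i s) \<xi> x" unfolding D_def by simp
    qed
  qed
  define r where "r = \<alpha> / \<beta>"
  have rpos: "r > 0" unfolding r_def using assms by simp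
  define K0 where "K0 = (\<beta> - \<alpha>) / r"
  have K0pos: "K0 \<ge> 0" unfolding K0_def using assms rpos by simp
  have P2: "\<forall>n::nat. \<exists>C>0. \<forall>(a::'d cond) T (\<xi>::real ^ 'd) z i x.
       conductivity \<alpha> \<beta> a \<and> T > 0 \<and> norm \<xi> = 1 \<longrightarrow>
       (\<forall>t\<in>{\<alpha>..\<beta>}.
          \<bar>deriv (\<lambda>s. (corrector T (cond_upd a z i s) \<xi> x) ^ (n + 1)) t\<bar>
          \<le> C * (\<bar>corrector T a \<xi> x\<bar> ^ n * (\<bar>grad (corrector T a \<xi>) z i\<bar> + 1)
                   * \<bar>grad (\<lambda>w. green T a w x) z i\<bar>
                 + (\<bar>grad (corrector T a \<xi>) z i\<bar> + 1) ^ (n + 1)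
                   * \<bar>grad (\<lambda>w. green T a w x) z i\<bar> ^ (n + 1)))"
  proof
    fix n :: nat
    define C where "C = (real n + 1) * 2 ^ n * (1 + K0 ^ n) / r\<^sup>2"
    have Cpos: "C > 0" unfolding C_def using rpos K0pos by (simp add: add_pos_nonneg)
    show "\<exists>C>0. \<forall>(a::'d cond) T (\<xi>::real ^ 'd) z i x.
       conductivity \<alpha> \<beta> a \<and> T > 0 \<and> norm \<xi> = 1 \<longrightarrow>
       (\<forall>t\<in>{\<alpha>..\<beta>}.
          \<bar>deriv (\<lambda>s. (corrector T (cond_upd a z i s) \<xi> x) ^ (n + 1)) t\<bar>
          \<le> C * (\<bar>corrector T a \<xi> x\<bar> ^ n * (\<bar>grad (corrector T a \<xi>) z i\<bar> + 1)
                   * \<bar>grad (\<lambda>w. green T a w x) z i\<bar>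
                 + (\<bar>grad (corrector T a \<xi>) z i\<bar> + 1) ^ (n + 1)
                   * \<bar>grad (\<lambda>w. green T a w x) z i\<bar> ^ (n + 1)))"
    proof (intro exI[of _ C] conjI Cpos allI impI ballI)
      fix a :: "'d cond" and T :: real and \<xi> :: "real ^ 'd" and z :: "'d site" and i :: 'd and x :: "'d site" and t :: real
      assume h: "conductivity \<alpha> \<beta> a \<and> T > 0 \<and> norm \<xi> = 1" and t: "t \<in> {\<alpha>..\<beta>}"
      define D where "D = grad (\<lambda>x. grad (\<lambda>w. green T a w x) z i) z i"
      define ca where "ca = grad (corrector T a \<xi>) z i + \<xi> $ i"
      define Fx where "Fx = grad (\<lambda>w. green T a w x) z i"
      define q where "q = 1 + (t - a z i) * D"
      define g where "g = \<bar>grad (corrector T a \<xi>) z i\<bar> + 1"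
      define A where "A = \<bar>corrector T a \<xi> x\<bar>"
      define H where "H = \<bar>Fx\<bar>"
      define p where "p s = corrector T a \<xi> x - (s - a z i) * (ca / (1 + (s - a z i) * D)) * Fx" for s
      have h1: "conductivity \<alpha> \<beta> a" and h2: "T > 0" and h3: "norm \<xi> = 1" using h by auto
      note CF = assms(1) h1 h2 h3 t
      have cm: "r \<le> q" "\<bar>ca\<bar> \<le> g" "\<bar>t - a z i\<bar> \<le> \<beta> - \<alpha>" "t > 0"
        "\<And>s. s > 0 \<Longrightarrow> corrector T (cond_upd a z i s) \<xi> x = p s"
      proof -
        show "r \<le> q" unfolding r_def q_def D_def by (rule common_facts(1)[OF CF])
        show "\<bar>ca\<bar> \<le> g" unfolding ca_def g_def by (rule common_facts(2)[OF CF])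
        show "\<bar>t - a z i\<bar> \<le> \<beta> - \<alpha>" by (rule common_facts(3)[OF CF])
        show "t > 0" by (rule common_facts(4)[OF CF])
        show "corrector T (cond_upd a z i s) \<xi> x = p s" if "s > 0" for s
          unfolding p_def ca_def D_def Fx_def by (rule common_facts(5)[OF CF that])
      qed
      have qpos: "q > 0" using cm(1) rpos by linarith
      have dp: "(p has_real_derivative (- ca * Fx / q\<^sup>2)) (at t)"
        unfolding p_def q_def by (rule deriv_p) (use qpos q_def in simp)
      have dpow: "((\<lambda>s. p s ^ Suc n) has_real_derivative (1 + of_nat n) * ((- ca * Fx / q\<^sup>2) * p t ^ n)) (at t)"
        by (rule DERIV_power_Suc[OF dp])
      have dcor: "((\<lambda>s. (corrector T (cond_upd a z i s) \<xi> x) ^ (n + 1)) has_real_derivative (1 + of_nat n) * ((- ca * Fx / q\<^sup>2) * p t ^ n)) (at t)"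
      proof (rule has_field_derivative_transform_within_open[OF dpow])
        show "open {0::real<..}" by simp
        show "t \<in> {0<..}" using cm(4) by simp
        fix s :: real assume "s \<in> {0<..}"
        then show "p s ^ Suc n = corrector T (cond_upd a z i s) \<xi> x ^ (n + 1)" using cm(5)[of s] by simp
      qed
      have deq: "deriv (\<lambda>s. (corrector T (cond_upd a z i s) \<xi> x) ^ (n + 1)) t = (1 + real n) * ((- ca * Fx / q\<^sup>2) * p t ^ n)"
        using DERIV_imp_deriv[OF dcor] by simp
      have g0: "g \<ge> 0" unfolding g_def by simp
      have H0: "H \<ge> 0" unfolding H_def by simp
      have A0: "A \<ge> 0" unfolding A_def by simp
      have caq: "\<bar>ca / q\<bar> \<le> g / r"
      proof -
        have "\<bar>ca / q\<bar> = \<bar>ca\<bar> / q" using qpos by simp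
        also have "\<dots> \<le> g / q" using cm(2) qpos by (intro divide_right_mono) auto
        also have "\<dots> \<le> g / r" using cm(1) rpos g0 by (intro divide_left_mono) auto
        finally show ?thesis .
      qed
      have Pb: "\<bar>p t\<bar> \<le> A + K0 * g * H"
      proof -
        have "\<bar>(t - a z i) * (ca / q) * Fx\<bar> = \<bar>t - a z i\<bar> * \<bar>ca / q\<bar> * H" unfolding H_def by (simp add: abs_mult)
        also have "\<dots> \<le> (\<beta> - \<alpha>) * (g / r) * H"
          using cm(3) caq H0 by (intro mult_right_mono mult_mono) auto
        also have "(\<beta> - \<alpha>) * (g / r) * H = K0 * g * H" unfolding K0_def by simp
        finally have b: "\<bar>(t - a z i) * (ca / q) * Fx\<bar> \<le> K0 * g * H" .
        have pe: "p t = corrector T a \<xi> x - (t - a z i) * (ca / q) * Fx" unfolding p_def q_def ..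
        show ?thesis unfolding A_def pe
          by (rule order_trans[OF abs_triangle_ineq4 add_left_mono[OF b]])
      qed
      have Pdb: "\<bar>- ca * Fx / q\<^sup>2\<bar> \<le> g * H / r\<^sup>2"
      proof -
        have "\<bar>- ca * Fx / q\<^sup>2\<bar> = \<bar>ca\<bar> * H / q\<^sup>2" unfolding H_def by (simp add: abs_mult)
        also have "\<dots> \<le> g * H / q\<^sup>2" using cm(2) H0 by (intro divide_right_mono mult_right_mono) auto
        also have "\<dots> \<le> g * H / r\<^sup>2" using cm(1) rpos g0 H0 by (intro divide_left_mono power_mono mult_nonneg_nonneg) auto
        finally show ?thesis .
      qed
      have "\<bar>(1 + real n) * ((- ca * Fx / q\<^sup>2) * p t ^ n)\<bar> \<le> C * (A ^ n * g * H + g ^ (n + 1) * H ^ (n + 1))"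
        unfolding C_def by (rule final_est[OF Pb Pdb A0 K0pos g0 H0 rpos])
      then show "\<bar>deriv (\<lambda>s. (corrector T (cond_upd a z i s) \<xi> x) ^ (n + 1)) t\<bar>
          \<le> C * (\<bar>corrector T a \<xi> x\<bar> ^ n * (\<bar>grad (corrector T a \<xi>) z i\<bar> + 1)
                   * \<bar>grad (\<lambda>w. green T a w x) z i\<bar>
                 + (\<bar>grad (corrector T a \<xi>) z i\<bar> + 1) ^ (n + 1)
                   * \<bar>grad (\<lambda>w. green T a w x) z i\<bar> ^ (n + 1))"
        unfolding deq A_def g_def H_def Fx_def .
    qed
  qed
  have P3: "\<exists>C>0. \<forall>(a::'d cond) T (\<xi>::real ^ 'd) z i.
       conductivity \<alpha> \<beta> a \<and> T > 0 \<and> norm \<xi> = 1 \<longrightarrow>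
       (\<forall>t\<in>{\<alpha>..\<beta>}.
          \<bar>grad (corrector T (cond_upd a z i t) \<xi>) z i\<bar>
          \<le> C * (\<bar>grad (corrector T a \<xi>) z i\<bar> + 1))"
  proof (intro exI[of _ "1 / r + 1"] conjI allI impI ballI)
    show "1 / r + 1 > 0" using rpos by (simp add: add_pos_pos)
    fix a :: "'d cond" and T :: real and \<xi> :: "real ^ 'd" and z :: "'d site" and i :: 'd and t :: real
    assume h: "conductivity \<alpha> \<beta> a \<and> T > 0 \<and> norm \<xi> = 1" and t: "t \<in> {\<alpha>..\<beta>}"
    define D where "D = grad (\<lambda>x. grad (\<lambda>w. green T a w x) z i) z i"
    define ca where "ca = grad (corrector T a \<xi>) z i + \<xi> $ i"
    define q where "q = 1 + (t - a z i) * D"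
    define g where "g = \<bar>grad (corrector T a \<xi>) z i\<bar> + 1"
    have h1: "conductivity \<alpha> \<beta> a" and h2: "T > 0" and h3: "norm \<xi> = 1" using h by auto
    note CF = assms(1) h1 h2 h3 t
    have cm: "r \<le> q" "\<bar>ca\<bar> \<le> g" "grad (corrector T (cond_upd a z i t) \<xi>) z i + \<xi> $ i = ca / q"
    proof -
      show "r \<le> q" unfolding r_def q_def D_def by (rule common_facts(1)[OF CF])
      show "\<bar>ca\<bar> \<le> g" unfolding ca_def g_def by (rule common_facts(2)[OF CF])
      show "grad (corrector T (cond_upd a z i t) \<xi>) z i + \<xi> $ i = ca / q"
        unfolding ca_def q_def D_def by (rule common_facts(6)[OF CF])
    qed
    have xi: "\<bar>\<xi> $ i\<bar> \<le> 1" using xib h by auto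
    have qpos: "q > 0" using cm(1) rpos by linarith
    have g1: "g \<ge> 1" unfolding g_def by simp
    have caq: "\<bar>ca / q\<bar> \<le> g / r"
    proof -
      have "\<bar>ca / q\<bar> = \<bar>ca\<bar> / q" using qpos by simp
      also have "\<dots> \<le> g / q" using cm(2) qpos by (intro divide_right_mono) auto
      also have "\<dots> \<le> g / r" using cm(1) rpos g1 by (intro divide_left_mono) auto
      finally show ?thesis .
    qed
    have "grad (corrector T (cond_upd a z i t) \<xi>) z i = ca / q - \<xi> $ i" using cm(3) by linarith
    then have "\<bar>grad (corrector T (cond_upd a z i t) \<xi>) z i\<bar> \<le> g / r + 1"
      using caq xi abs_triangle_ineq4[of "ca / q" "\<xi> $ i"] by linarith
    also have "\<dots> \<le> (1 / r + 1) * g" using g1 rpos by (simp add: field_simps)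
    finally show "\<bar>grad (corrector T (cond_upd a z i t) \<xi>) z i\<bar> \<le> (1 / r + 1) * (\<bar>grad (corrector T a \<xi>) z i\<bar> + 1)"
      unfolding g_def .
  qed
  show ?thesis using P1 P2 P3 by blast
qed



end
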